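(* Let $V$ be a vertex algebra, $M_1,M_2,M_3$ be $V$-modules and $\mathcal{Y}$ an intertwining operator of type $\binom{M_3}{M_1\ M_2}$. Then for all $v\in V$, $a\in M_1$, $b\in M_2$: (v) $[v_\lambda(a\cdot b)]=a\cdot[v_\lambda b]+[v_\lambda a]\cdot b+\int_0^\lambda[[v_\lambda a]_\mu b]^0\,d\mu$; (vi) $[(v\cdot a)_\lambda b]=(e^{T\partial_\lambda}v)[a_\lambda b]+(e^{T\partial_\lambda}a)[v_\lambda b]+\int_0^\lambda[a_\mu[v_{\lambda-\mu}b]]\,d\mu$; (vii) $[a_\lambda(v\cdot b)]=v\cdot[a_\lambda b]+[a_\lambda v]\cdot b+\int_0^\lambda[[a_\lambda v]_\mu b]\,d\mu$.
   Context: Notation: for $n\in\mathbb{C}$, $\lambda^{(n)}:=\lambda^n/\Gamma(n+1)$ with $1/\Gamma$ the entire reciprocal Gamma function (so $\lambda^{(n)}=0$ for $n\in\mathbb{Z}_{<0}$, $\lambda^{(n)}=\lambda^n/n!$ for $n\in\mathbb{Z}_{\ge0}$); $T^{(j)}:=T^j/j!$. Fix $S\subset\mathbb{C}$ with $S+\mathbb{Z}=S$, $S/\mathbb{Z}$ finite; $U[[z]]z^{-S}$ denotes formal sums $\sum_nf_nz^n$ with $n$ in a finite union of sets $-d+\mathbb{Z}_{\ge0}$, $d\in S$; the formal Fourier transform is $F^\lambda_z(\sum_nu_nz^{-n-1})=\sum_nu_n\lambda^{(n)}$. A vertex algebra $V$ has vacuum $\mathbf 1$, fields $Y(v,z)=\sum_{n\in\mathbb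 Z}v_{(n)}z^{-n-1}$ and translation operator $T$. A $V$-module is a vector space $M$ with $T\in\mathrm{End}(M)$ and $Y^M(v,z)=\sum_{n\in\mathbb Z}v_{(n)}z^{-n-1}\in\mathrm{Hom}(M,M((z)))$ such that $Y^M(\mathbf 1,z)=\mathrm{id}_M$, $[T,Y^M(v,z)]=\partial_zY^M(v,z)$, and the Borcherds identity below holds with $\mathcal Y=Y^M$ and $k\in\mathbb Z$. An intertwining operator of type $\binom{M_3}{M_1\ M_2}$ is a linear map $M_1\to\mathrm{Hom}(M_2,M_3[[z]]z^{-S})$, $a\mapsto\mathcal Y(a,z)=\sum_{n\in\mathbb C}a_{(n)}z^{-n-1}$, such that (I1) $T\mathcal Y(a,z)-\mathcal Y(a,z)T=\mathcal Y(Ta,z)=\partial_z\mathcal Y(a,z)$, and (I2) for all $v\in V,a\in M_1,b\in M_2$, $n,m\in\mathbb Z$, $k\in\mathbb C$: $\sum_{j\ge0}(-1)^j\binom nj\big(v_{(m+n-j)}a_{(k+j)}b-(-1)^na_{(n+k-j)}v_{(m+j)}b\big)=\sum_{j\ge0}\binom mj(v_{(n+j)}a)_{(m+k-j)}b$. Brackets and products: for a $V$-module $M$, $v\in V$, $c\in M$: $[v_\lambda c]:=\sum_{j\in\mathbb Z_{\ge0}}\lambda^{(j)}v_{(j)}c$ and $v\cdot c:=v_{(-1)}c$. For $a\in M_1,b\in M_2$: $[a_\lambda b]:=F^\lambda_z(\mathcal Y(a,z)b)=\sum_{n\in\mathbb C}\lambda^{(n)}a_{(n)}b$, $[a_\lambda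 b]^0:=\sum_{n\in\mathbb Z_{\ge0}}\lambda^{(n)}a_{(n)}b$, and $a\cdot b:=a_{(-1)}b$. All brackets and products are extended coefficientwise to expressions depending polynomially or as series on auxiliary variables; e.g. $[v_{\lambda-\mu}b]:=\sum_{j\ge0}(\lambda-\mu)^{(j)}v_{(j)}b$ with $(\lambda-\mu)^{(j)}=(\lambda-\mu)^j/j!$. For $x\in V$ or $x\in M_1$ and an expression $P(\lambda)$: $(e^{T\partial_\lambda}x)P(\lambda):=\sum_{j\ge0}(T^{(j)}x)\cdot\partial_\lambda^jP(\lambda)$. $[a_\lambda v]:=-[v_{-\lambda-T}a]:=-\sum_{j\ge0}\frac{(-\lambda-T)^j}{j!}(v_{(j)}a)\in M_1[\lambda]$, with $T$ acting on $M_1$. The formal integral $\int_0^\lambda\cdot\,d\mu$ acts on formal linear combinations of powers $\mu^c$ ($c\in\mathbb C$) with coefficients possibly depending on $\lambda$ (treated as constants; polynomial factors in $\lambda-\mu$ are expanded first): $\int_0^\lambda\mu^{(c)}d\mu:=\lambda^{(c+1)}$ for $c\in\mathbb C\setminus\mathbb Z_{<0}$, and $\int_0^\lambda\mu^cd\mu:=0$ for $c\in\mathbb Z_{<0}$. *)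

theory Defs
  imports "HOL-Analysis.Gamma_Function" "HOL-Library.Groups_Big_Fun"
begin

text \<open>All vector spaces are complex vector spaces, given by an explicit scalar
multiplication (HOL's vector_space locale).  Fields are encoded by their modes:
an integer- (resp. complex-) indexed family v_(n) c.

Formal expressions in lambda are encoded by coefficient functions
P :: complex => 'a, P c being the coefficient of the plain power lambda^c
(so lambda^(n) = rGamma(n+1) lambda^n).  Expressions in lambda and mu are encoded
by Q :: complex => complex => 'a, Q p q being the coefficient of lambda^p mu^q.
Infinite formal sums are collected coefficientwise with Sum_any (the sum over
the finitely many nonzero terms).\<close>

definition bilin ::
  "(complex \<Rightarrow> 'a::ab_group_add \<Rightarrow> 'a) \<Rightarrow> (complex \<Rightarrow> 'b::ab_group_add \<Rightarrow> 'b)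
   \<Rightarrow> (complex \<Rightarrow> 'c::ab_group_add \<Rightarrow> 'c) \<Rightarrow> ('a \<Rightarrow> 'b \<Rightarrow> 'c) \<Rightarrow> bool" where
  "bilin s1 s2 s3 f \<longleftrightarrow>
     (\<forall>x. Vector_Spaces.linear s2 s3 (f x)) \<and> (\<forall>y. Vector_Spaces.linear s1 s3 (\<lambda>x. f x y))"

definition truncated :: "(int \<Rightarrow> 'v \<Rightarrow> 'm \<Rightarrow> 'm::zero) \<Rightarrow> bool" where
  "truncated act \<longleftrightarrow> (\<forall>v c. \<exists>N. \<forall>n\<ge>N. act n v c = 0)"

text \<open>Borcherds identity for an operator Yop of type (M3 / M1 M2), with
k ranging over the index ring 'k (int for modules, complex for intertwiners).\<close>
definition borcherds ::
  "(complex \<Rightarrow> 'm3::ab_group_add \<Rightarrow> 'm3) \<Rightarrow> (int \<Rightarrow> 'v \<Rightarrow> 'm1 \<Rightarrow> 'm1)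
   \<Rightarrow> (int \<Rightarrow> 'v \<Rightarrow> 'm2 \<Rightarrow> 'm2) \<Rightarrow> (int \<Rightarrow> 'v \<Rightarrow> 'm3 \<Rightarrow> 'm3)
   \<Rightarrow> ('k::comm_ring_1 \<Rightarrow> 'm1 \<Rightarrow> 'm2 \<Rightarrow> 'm3) \<Rightarrow> bool" where
  "borcherds s3 act1 act2 act3 Yop \<longleftrightarrow>
    (\<forall>v a b (n::int) (m::int) (k::'k).
       (\<Sum>j::nat. s3 ((-1)^j * (of_int n gchoose j))
           (act3 (m + n - int j) v (Yop (k + of_nat j) a b)
            - s3 ((-1)^(nat \<bar>n\<bar>)) (Yop (of_int n + k - of_nat j) a (act2 (m + int j) v b))))
     = (\<Sum>j::nat. s3 (of_int m gchoose j) (Yop (of_int m + k - of_nat j) (act1 (n + int j) v a) b)))"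

definition vertex_algebra ::
  "(complex \<Rightarrow> 'v::ab_group_add \<Rightarrow> 'v) \<Rightarrow> 'v \<Rightarrow> ('v \<Rightarrow> 'v) \<Rightarrow> (int \<Rightarrow> 'v \<Rightarrow> 'v \<Rightarrow> 'v) \<Rightarrow> bool" where
  "vertex_algebra sV vac TV Y \<longleftrightarrow>
     vector_space sV \<and> Vector_Spaces.linear sV sV TV \<and> (\<forall>n. bilin sV sV sV (Y n)) \<and> truncated Y \<and>
     (\<forall>n w. Y n vac w = (if n = -1 then w else 0)) \<and>
     (\<forall>v. Y (-1) v vac = v) \<and> (\<forall>v n. n \<ge> 0 \<longrightarrow> Y n v vac = 0) \<and> TV vac = 0 \<and>
     (\<forall>n v w. TV (Y n v w) - Y n v (TV w) = sV (- of_int n) (Y (n - 1) v w)) \<and>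
     borcherds sV Y Y Y Y"

definition va_module ::
  "(complex \<Rightarrow> 'v::ab_group_add \<Rightarrow> 'v) \<Rightarrow> 'v \<Rightarrow> (int \<Rightarrow> 'v \<Rightarrow> 'v \<Rightarrow> 'v)
   \<Rightarrow> (complex \<Rightarrow> 'm::ab_group_add \<Rightarrow> 'm) \<Rightarrow> ('m \<Rightarrow> 'm) \<Rightarrow> (int \<Rightarrow> 'v \<Rightarrow> 'm \<Rightarrow> 'm) \<Rightarrow> bool" where
  "va_module sV vac Y sM TM act \<longleftrightarrow>
     vector_space sM \<and> Vector_Spaces.linear sM sM TM \<and> (\<forall>n. bilin sV sM sM (act n)) \<and>
     truncated act \<and>
     (\<forall>n c. act n vac c = (if n = -1 then c else 0)) \<and>
     (\<forall>n v c. TM (act n v c) - act n v (TM c) = sM (- of_int n) (act (n - 1) v c)) \<and>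
     borcherds sM Y act act act"

text \<open>Intertwining operator of type (M3 / M1 M2): a_(n) b = Yi n a b, n complex,
with Y(a,z) b in M3[[z]] z^(-S).\<close>
definition intertwining ::
  "complex set \<Rightarrow> (complex \<Rightarrow> 'm1::ab_group_add \<Rightarrow> 'm1) \<Rightarrow> (complex \<Rightarrow> 'm2::ab_group_add \<Rightarrow> 'm2)
   \<Rightarrow> (complex \<Rightarrow> 'm3::ab_group_add \<Rightarrow> 'm3) \<Rightarrow> ('m1 \<Rightarrow> 'm1) \<Rightarrow> ('m2 \<Rightarrow> 'm2) \<Rightarrow> ('m3 \<Rightarrow> 'm3)
   \<Rightarrow> (int \<Rightarrow> 'v \<Rightarrow> 'm1 \<Rightarrow> 'm1) \<Rightarrow> (int \<Rightarrow> 'v \<Rightarrow> 'm2 \<Rightarrow> 'm2) \<Rightarrow> (int \<Rightarrow> 'v \<Rightarrow> 'm3 \<Rightarrow> 'm3)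
   \<Rightarrow> (complex \<Rightarrow> 'm1 \<Rightarrow> 'm2 \<Rightarrow> 'm3) \<Rightarrow> bool" where
  "intertwining S s1 s2 s3 T1 T2 T3 act1 act2 act3 Yi \<longleftrightarrow>
     (\<forall>n. bilin s1 s2 s3 (Yi n)) \<and>
     (\<forall>a b. \<exists>D. finite D \<and> D \<subseteq> S \<and>
        (\<forall>n. Yi n a b \<noteq> 0 \<longrightarrow> (\<exists>d\<in>D. \<exists>k::nat. n = d - 1 - of_nat k))) \<and>
     (\<forall>n a b. T3 (Yi n a b) - Yi n a (T2 b) = Yi n (T1 a) b) \<and>
     (\<forall>n a b. Yi n (T1 a) b = s3 (- n) (Yi (n - 1) a b)) \<and>
     borcherds s3 act1 act2 act3 Yi"

text \<open>[v_lambda c] = sum_(j>=0) lambda^(j) v_(j) c\<close>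
definition lbr :: "(complex \<Rightarrow> 'm \<Rightarrow> 'm) \<Rightarrow> (int \<Rightarrow> 'v \<Rightarrow> 'm \<Rightarrow> 'm::zero) \<Rightarrow> 'v \<Rightarrow> 'm \<Rightarrow> complex \<Rightarrow> 'm" where
  "lbr s act v c = (\<lambda>p. if p \<in> \<nat> then s (rGamma (p + 1)) (act \<lfloor>Re p\<rfloor> v c) else 0)"

text \<open>[v_(lambda-mu) c] = sum_j (lambda-mu)^(j) v_(j) c, expanded:
coefficient of lambda^p mu^q is (-1)^q/(p! q!) v_(p+q) c.\<close>
definition lbr_diff ::
  "(complex \<Rightarrow> 'm \<Rightarrow> 'm) \<Rightarrow> (int \<Rightarrow> 'v \<Rightarrow> 'm \<Rightarrow> 'm::zero) \<Rightarrow> 'v \<Rightarrow> 'm \<Rightarrow> complex \<Rightarrow> complex \<Rightarrow> 'm" where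
  "lbr_diff s act v c = (\<lambda>p q. if p \<in> \<nat> \<and> q \<in> \<nat>
      then s ((-1)^(nat \<lfloor>Re q\<rfloor>) * rGamma (p + 1) * rGamma (q + 1)) (act (\<lfloor>Re p\<rfloor> + \<lfloor>Re q\<rfloor>) v c)
      else 0)"

text \<open>[a_lambda b] = sum_(n in C) lambda^(n) a_(n) b\<close>
definition ibr :: "(complex \<Rightarrow> 'm3 \<Rightarrow> 'm3) \<Rightarrow> (complex \<Rightarrow> 'm1 \<Rightarrow> 'm2 \<Rightarrow> 'm3) \<Rightarrow> 'm1 \<Rightarrow> 'm2 \<Rightarrow> complex \<Rightarrow> 'm3" where
  "ibr s Yi a b = (\<lambda>p. s (rGamma (p + 1)) (Yi p a b))"

text \<open>[a_lambda b]^0 = sum_(n in Z>=0) lambda^(n) a_(n) b\<close>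
definition ibr0 :: "(complex \<Rightarrow> 'm3 \<Rightarrow> 'm3) \<Rightarrow> (complex \<Rightarrow> 'm1 \<Rightarrow> 'm2 \<Rightarrow> 'm3::zero) \<Rightarrow> 'm1 \<Rightarrow> 'm2 \<Rightarrow> complex \<Rightarrow> 'm3" where
  "ibr0 s Yi a b = (\<lambda>p. if p \<in> \<nat> then s (rGamma (p + 1)) (Yi p a b) else 0)"

text \<open>[a_mu X] for X an expression in lambda, mu (polynomial in mu) with coefficients
in M2, extended coefficientwise: mu^q [a_mu x] = sum_n mu^q mu^(n) a_(n) x.\<close>
definition ibr_mu ::
  "(complex \<Rightarrow> 'm3 \<Rightarrow> 'm3) \<Rightarrow> (complex \<Rightarrow> 'm1 \<Rightarrow> 'm2 \<Rightarrow> 'm3::comm_monoid_add) \<Rightarrow> 'm1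
   \<Rightarrow> (complex \<Rightarrow> complex \<Rightarrow> 'm2) \<Rightarrow> complex \<Rightarrow> complex \<Rightarrow> 'm3" where
  "ibr_mu s Yi a X = (\<lambda>p r. \<Sum>q. s (rGamma (r - q + 1)) (Yi (r - q) a (X p q)))"

text \<open>[a_lambda v] := - [v_(-lambda-T) a] = - sum_j (-lambda-T)^j/j! (v_(j) a) in M1[lambda].\<close>
definition ibr_rev ::
  "(complex \<Rightarrow> 'm1 \<Rightarrow> 'm1) \<Rightarrow> ('m1 \<Rightarrow> 'm1) \<Rightarrow> (int \<Rightarrow> 'v \<Rightarrow> 'm1 \<Rightarrow> 'm1::ab_group_add) \<Rightarrow> 'm1 \<Rightarrow> 'v
   \<Rightarrow> complex \<Rightarrow> 'm1" where
  "ibr_rev s T act a v = (\<lambda>p. if p \<in> \<nat> then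
      - (\<Sum>j::nat. if nat \<lfloor>Re p\<rfloor> \<le> j
           then s ((-1)^j * of_nat (j choose nat \<lfloor>Re p\<rfloor>) / fact j)
                  ((T ^^ (j - nat \<lfloor>Re p\<rfloor>)) (act (int j) v a))
           else 0)
      else 0)"

text \<open>j-th derivative in lambda: d^j lambda^c = c(c-1)...(c-j+1) lambda^(c-j).\<close>
definition ser_deriv :: "(complex \<Rightarrow> 'a \<Rightarrow> 'a) \<Rightarrow> nat \<Rightarrow> (complex \<Rightarrow> 'a) \<Rightarrow> complex \<Rightarrow> 'a" where
  "ser_deriv s j P = (\<lambda>p. s (pochhammer (p + 1) j) (P (p + of_nat j)))"

text \<open>(e^(T d_lambda) x) P(lambda) = sum_j (T^(j) x) . d_lambda^j P(lambda), where
dot x y is the product x . y (i.e. the (-1)-mode).\<close>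
definition eTd ::
  "(complex \<Rightarrow> 'x \<Rightarrow> 'x) \<Rightarrow> (complex \<Rightarrow> 'a \<Rightarrow> 'a) \<Rightarrow> ('x \<Rightarrow> 'a \<Rightarrow> 'b::comm_monoid_add) \<Rightarrow> ('x \<Rightarrow> 'x)
   \<Rightarrow> 'x \<Rightarrow> (complex \<Rightarrow> 'a) \<Rightarrow> complex \<Rightarrow> 'b" where
  "eTd sx sa dot T x P = (\<lambda>p. \<Sum>j::nat. dot (sx (1 / fact j) ((T ^^ j) x)) (ser_deriv sa j P p))"

text \<open>Formal integral int_0^lambda . d mu on an expression Q(lambda,mu):
lambda^p mu^c |-> lambda^(p+c+1)/(c+1) for c not a negative integer, and 0 otherwise
(equivalently mu^(c) |-> lambda^(c+1)).\<close>
definition fint ::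
  "(complex \<Rightarrow> 'a \<Rightarrow> 'a) \<Rightarrow> (complex \<Rightarrow> complex \<Rightarrow> 'a::comm_monoid_add) \<Rightarrow> complex \<Rightarrow> 'a" where
  "fint s Q = (\<lambda>e. \<Sum>c. if c \<in> {of_int k | k. k < 0} then 0 else s (1 / (c + 1)) (Q (e - c - 1) c))"

end

theory Submission
  imports Defs
begin


lemma rGamma_nat1: "rGamma (of_nat n + 1 :: complex) = inverse (fact n)"
  using Gamma_fact[of n, where 'a=complex] by (simp add: rGamma_inverse_Gamma add.commute)

lemma binom_shift_diff:
  fixes g :: "nat \<Rightarrow> complex"
  shows "(\<Sum>k\<le>Suc j. of_nat (Suc j choose k) * (-1)^k * g k) =
         (\<Sum>k\<le>j. of_nat (j choose k) * (-1)^k * g k) - (\<Sum>k\<le>j. of_nat (j choose k) * (-1)^k * g (Suc k))"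
proof -
  have "(\<Sum>k\<le>Suc j. of_nat (Suc j choose k) * (-1)^k * g k)
      = g 0 + (\<Sum>k\<le>j. of_nat (Suc j choose Suc k) * (-1)^(Suc k) * g (Suc k))"
    by (subst sum.atMost_Suc_shift) simp
  also have "(\<Sum>k\<le>j. of_nat (Suc j choose Suc k) * (-1)^(Suc k) * g (Suc k))
     = - (\<Sum>k\<le>j. of_nat (j choose k) * (-1)^k * g (Suc k))
       - (\<Sum>k\<le>j. of_nat (j choose Suc k) * (-1)^k * g (Suc k))"
    by (simp add: sum_negf[symmetric] sum_subtractf[symmetric] algebra_simps)
  also have "(\<Sum>k\<le>j. of_nat (j choose Suc k) * (-1)^k * g (Suc k))
      = - ((\<Sum>k\<le>j. of_nat (j choose k) * (-1)^k * g k) - g 0)"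
  proof -
    have "(\<Sum>k\<le>Suc j. of_nat (j choose k) * (-1)^k * g k) = g 0 + (\<Sum>k\<le>j. of_nat (j choose Suc k) * (-1)^(Suc k) * g (Suc k))"
      by (subst sum.atMost_Suc_shift) simp
    moreover have "(\<Sum>k\<le>Suc j. of_nat (j choose k) * (-1)^k * g k) = (\<Sum>k\<le>j. of_nat (j choose k) * (-1)^k * g k)"
      by simp
    ultimately have "g 0 - (\<Sum>k\<le>j. of_nat (j choose Suc k) * (-1)^k * g (Suc k)) = (\<Sum>k\<le>j. of_nat (j choose k) * (-1)^k * g k)"
      by (simp add: sum_negf)
    then show ?thesis by (simp add: algebra_simps)
  qed
  finally show ?thesis by simp
qed

definition Fs :: "nat \<Rightarrow> complex \<Rightarrow> complex" where
  "Fs j x = (\<Sum>k\<le>j. of_nat (j choose k) * (-1)^k * (1 / (x + of_nat k)))"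

lemma Fs_rec: "Fs (Suc j) x = Fs j x - Fs j (x + 1)"
  unfolding Fs_def by (subst binom_shift_diff) (simp add: add_ac)

lemma nonpos_Ints_plus1: "x + 1 \<in> \<int>\<^sub>\<le>\<^sub>0 \<Longrightarrow> (x::complex) \<in> \<int>\<^sub>\<le>\<^sub>0"
proof -
  assume "x + 1 \<in> \<int>\<^sub>\<le>\<^sub>0"
  then obtain n where "x + 1 = - of_nat n" by (auto elim!: nonpos_Ints_cases')
  then have "x = - of_nat (Suc n)" by (simp add: algebra_simps eq_neg_iff_add_eq_0)
  then show ?thesis by (metis minus_of_nat_in_nonpos_Ints)
qed

lemma Fs_poch: "x \<notin> \<int>\<^sub>\<le>\<^sub>0 \<Longrightarrow> Fs j x * pochhammer x (Suc j) = fact j"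
proof (induction j arbitrary: x)
  case 0
  then have "x \<noteq> 0" by auto
  then show ?case by (simp add: Fs_def)
next
  case (Suc j)
  have x1: "x + 1 \<notin> \<int>\<^sub>\<le>\<^sub>0" using Suc.prems nonpos_Ints_plus1 by blast
  have p1: "pochhammer x (Suc (Suc j)) = pochhammer x (Suc j) * (x + of_nat (Suc j))"
    by (rule pochhammer_Suc)
  have p2: "pochhammer x (Suc (Suc j)) = x * pochhammer (x + 1) (Suc j)"
    by (rule pochhammer_rec)
  have q1: "Fs j x * pochhammer x (Suc (Suc j)) = fact j * (x + of_nat (Suc j))"
    using Suc.IH[OF Suc.prems] unfolding p1 by (simp add: mult.assoc[symmetric])
  have q2: "Fs j (x+1) * pochhammer x (Suc (Suc j)) = fact j * x"
    using Suc.IH[OF x1] unfolding p2 by (simp add: mult_ac)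
  have "Fs (Suc j) x * pochhammer x (Suc (Suc j))
      = Fs j x * pochhammer x (Suc (Suc j)) - Fs j (x+1) * pochhammer x (Suc (Suc j))"
    by (simp add: Fs_rec algebra_simps)
  also have "\<dots> = fact j * (x + of_nat (Suc j)) - fact j * x"
    using q1 q2 by simp
  also have "\<dots> = fact (Suc j)" by (simp add: algebra_simps)
  finally show ?case .
qed

lemma rGamma_Fs: "rGamma x * Fs j x = (if x \<in> \<int>\<^sub>\<le>\<^sub>0 then 0 else fact j * rGamma (x + of_nat (Suc j)))"
proof (cases "x \<in> \<int>\<^sub>\<le>\<^sub>0")
  case True then show ?thesis by (simp add: rGamma_nonpos_Int)
next
  case False
  have "rGamma x * Fs j x = rGamma (x + of_nat (Suc j)) * (Fs j x * pochhammer x (Suc j))"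
    by (subst pochhammer_rGamma[of x "Suc j"]) (simp add: mult_ac)
  then show ?thesis using False Fs_poch[OF False] by simp
qed




lemma hom_Sum_any:
  assumes f: "module_hom s s' f" and fin: "finite {a. g a \<noteq> 0}"
  shows "f (Sum_any g) = Sum_any (\<lambda>a. f (g a))"
proof -
  have "Sum_any (\<lambda>a. f (g a)) = sum (\<lambda>a. f (g a)) {a. g a \<noteq> 0}"
    by (rule Sum_any.expand_superset[OF fin]) (auto simp: module_hom.zero[OF f])
  then show ?thesis
    by (simp add: Sum_any.expand_set module_hom.sum[OF f])
qed

lemma scale_Sum_any:
  assumes vs: "vector_space s"
  shows "s c (Sum_any g) = Sum_any (\<lambda>a. s c (g a))"
proof -
  interpret vector_space s by (rule vs)
  show ?thesis
proof (cases "c = 0")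
  case True then show ?thesis by simp
next
  case False
  then have eq: "{a. s c (g a) \<noteq> 0} = {a. g a \<noteq> 0}"
    by auto
  show ?thesis
  proof (cases "finite {a. g a \<noteq> 0}")
    case True
    then show ?thesis unfolding Sum_any.expand_set eq
      by (simp add: scale_sum_right)
  next
    case False then show ?thesis using eq by simp
  qed
qed
qed

lemma gch_m1: "(-1)^j * ((-1::complex) gchoose j) = 1"
  by (simp add: gbinomial_pochhammer pochhammer_fact[symmetric] power_mult_distrib[symmetric])

lemma poch2: "pochhammer (2::complex) j = fact (Suc j)"
  by (simp add: pochhammer_fact pochhammer_rec)

lemma gch_m2: "(-1)^j * ((-2::complex) gchoose j) = of_nat j + 1"
proof -
  have "(-1)^j * ((-2::complex) gchoose j) = (-1)^j * (-1)^j * pochhammer 2 j / fact j"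
    by (simp add: gbinomial_pochhammer)
  also have "\<dots> = of_nat j + 1" by (simp add: poch2 power_mult_distrib[symmetric] del: fact_Suc) (simp add: fact_Suc)
  finally show ?thesis .
qed


lemma ofint_NI: "(of_int m :: complex) \<in> {of_int k |k. k < 0} \<longleftrightarrow> m < 0"
proof
  assume "(of_int m :: complex) \<in> {of_int k |k. k < 0}"
  then obtain k where k: "(of_int m::complex) = of_int k" "k < 0" by auto
  then have "m = k" using of_int_eq_iff by blast
  with k show "m < 0" by simp
qed auto

lemma ofnat_notNI: "(of_nat i :: complex) \<notin> {of_int k |k. k < 0}"
  using ofint_NI[of "int i"] by simp

lemma NI_iff: "(c::complex) \<in> {of_int k |k. k < 0} \<longleftrightarrow> c + 1 \<in> \<int>\<^sub>\<le>\<^sub>0"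
proof
  assume "c \<in> {of_int k |k. k < 0}"
  then obtain k where k: "c = of_int k" "k < 0" by auto
  then have "c + 1 = of_int (k + 1)" by simp
  moreover have "k + 1 \<le> 0" using k by simp
  ultimately show "c + 1 \<in> \<int>\<^sub>\<le>\<^sub>0" by (metis nonpos_Ints_of_int)
next
  assume "c + 1 \<in> \<int>\<^sub>\<le>\<^sub>0"
  then obtain n where "c + 1 = - of_nat n" by (auto elim!: nonpos_Ints_cases')
  then have "c = of_int (- int n - 1)" by (simp add: algebra_simps eq_neg_iff_add_eq_0)
  moreover have "- int n - 1 < 0" by simp
  ultimately show "c \<in> {of_int k |k. k < 0}" by blast
qed

lemma NI_rGamma: "(c::complex) \<in> {of_int k |k. k < 0} \<Longrightarrow> 1 / (c + 1) * rGamma (c + 1) = 0"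
  using NI_iff rGamma_nonpos_Int by auto

lemma poch_neg_shift: "pochhammer (1 - x - of_nat k) k = (-1)^k * pochhammer (x::complex) k"
proof -
  have "pochhammer (- (x + of_nat k - 1)) k = (-1)^k * pochhammer (x + of_nat k - 1 - of_nat k + 1) k"
    by (rule pochhammer_minus)
  then show ?thesis by (simp add: algebra_simps)
qed

lemma Fs_sum: "(\<Sum>k\<le>j. of_nat (j choose k) * (-1)^k * pochhammer x k * (rGamma (x + of_nat k) / (x + of_nat k)))
   = (if (x::complex) \<in> \<int>\<^sub>\<le>\<^sub>0 then 0 else fact j * rGamma (x + of_nat (Suc j)))"
proof -
  have "(\<Sum>k\<le>j. of_nat (j choose k) * (-1)^k * pochhammer x k * (rGamma (x + of_nat k) / (x + of_nat k)))
      = rGamma x * Fs j x"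
    unfolding Fs_def sum_distrib_left
  proof (rule sum.cong[OF refl])
    fix k assume "k \<in> {..j}"
    have "pochhammer x k * rGamma (x + of_nat k) = rGamma x" by (simp add: pochhammer_rGamma[of x k])
    then show "of_nat (j choose k) * (-1)^k * pochhammer x k * (rGamma (x + of_nat k) / (x + of_nat k))
        = rGamma x * (of_nat (j choose k) * (-1)^k * (1 / (x + of_nat k)))"
      by (metis (no_types, lifting) mult.assoc mult.commute times_divide_eq_right mult.right_neutral)
  qed
  then show ?thesis by (simp add: rGamma_Fs)
qed

locale ctx =
  fixes sV :: "complex \<Rightarrow> 'v::ab_group_add \<Rightarrow> 'v" and vac :: 'v and TV :: "'v \<Rightarrow> 'v"
    and Y :: "int \<Rightarrow> 'v \<Rightarrow> 'v \<Rightarrow> 'v"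
    and s1 :: "complex \<Rightarrow> 'm1::ab_group_add \<Rightarrow> 'm1" and T1 :: "'m1 \<Rightarrow> 'm1"
    and act1 :: "int \<Rightarrow> 'v \<Rightarrow> 'm1 \<Rightarrow> 'm1"
    and s2 :: "complex \<Rightarrow> 'm2::ab_group_add \<Rightarrow> 'm2" and T2 :: "'m2 \<Rightarrow> 'm2"
    and act2 :: "int \<Rightarrow> 'v \<Rightarrow> 'm2 \<Rightarrow> 'm2"
    and s3 :: "complex \<Rightarrow> 'm3::ab_group_add \<Rightarrow> 'm3" and T3 :: "'m3 \<Rightarrow> 'm3"
    and act3 :: "int \<Rightarrow> 'v \<Rightarrow> 'm3 \<Rightarrow> 'm3"
    and Yi :: "complex \<Rightarrow> 'm1 \<Rightarrow> 'm2 \<Rightarrow> 'm3" and S :: "complex set"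
  assumes VA: "vertex_algebra sV vac TV Y"
    and M1: "va_module sV vac Y s1 T1 act1"
    and M2: "va_module sV vac Y s2 T2 act2"
    and M3: "va_module sV vac Y s3 T3 act3"
    and I: "intertwining S s1 s2 s3 T1 T2 T3 act1 act2 act3 Yi"
begin

lemma vsV: "vector_space sV" using VA by (simp add: vertex_algebra_def)
lemma vs1: "vector_space s1" using M1 by (simp add: va_module_def)
lemma vs2: "vector_space s2" using M2 by (simp add: va_module_def)
lemma vs3: "vector_space s3" using M3 by (simp add: va_module_def)

sublocale WV: vector_space sV by (rule vsV)
sublocale W1: vector_space s1 by (rule vs1)
sublocale W2: vector_space s2 by (rule vs2)
sublocale W3: vector_space s3 by (rule vs3)

lemma Yi_hom_r: "module_hom s2 s3 (Yi n x)"
  using I by (simp add: intertwining_def bilin_def module_hom_iff_linear)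
lemma Yi_hom_l: "module_hom s1 s3 (\<lambda>x. Yi n x y)"
  using I by (simp add: intertwining_def bilin_def module_hom_iff_linear)
lemma act1_hom_r: "module_hom s1 s1 (act1 n v)"
  using M1 by (simp add: va_module_def bilin_def module_hom_iff_linear)
lemma act2_hom_r: "module_hom s2 s2 (act2 n v)"
  using M2 by (simp add: va_module_def bilin_def module_hom_iff_linear)
lemma act3_hom_r: "module_hom s3 s3 (act3 n v)"
  using M3 by (simp add: va_module_def bilin_def module_hom_iff_linear)
lemma act3_hom_l: "module_hom sV s3 (\<lambda>v. act3 n v c)"
  using M3 by (simp add: va_module_def bilin_def module_hom_iff_linear)
lemma Y_hom_r: "module_hom sV sV (Y n v)"
  using VA by (simp add: vertex_algebra_def bilin_def module_hom_iff_linear)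

lemmas Yi_r = module_hom.add[OF Yi_hom_r] module_hom.scale[OF Yi_hom_r] module_hom.zero[OF Yi_hom_r]
   module_hom.neg[OF Yi_hom_r] module_hom.diff[OF Yi_hom_r]
lemmas Yi_l = module_hom.add[OF Yi_hom_l] module_hom.scale[OF Yi_hom_l] module_hom.zero[OF Yi_hom_l]
   module_hom.neg[OF Yi_hom_l] module_hom.diff[OF Yi_hom_l]
lemmas act3_r = module_hom.add[OF act3_hom_r] module_hom.scale[OF act3_hom_r] module_hom.zero[OF act3_hom_r]
   module_hom.neg[OF act3_hom_r] module_hom.diff[OF act3_hom_r]
lemmas act3_l = module_hom.scale[OF act3_hom_l]
lemmas act1_r = module_hom.zero[OF act1_hom_r]
lemmas act2_r = module_hom.zero[OF act2_hom_r]

lemma Yi_T1: "Yi n (T1 a) b = s3 (- n) (Yi (n - 1) a b)"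
  using I by (simp add: intertwining_def)

lemma Yi_T1_pow: "Yi n ((T1^^i) a) b = s3 (pochhammer (- n) i) (Yi (n - of_nat i) a b)"
proof (induction i arbitrary: a)
  case 0 then show ?case by simp
next
  case (Suc i)
  have "Yi n ((T1^^Suc i) a) b = Yi n ((T1^^i) (T1 a)) b" by (simp add: funpow_swap1)
  also have "\<dots> = s3 (pochhammer (- n) i) (Yi (n - of_nat i) (T1 a) b)" by (rule Suc.IH)
  also have "\<dots> = s3 (pochhammer (- n) (Suc i)) (Yi (n - of_nat (Suc i)) a b)"
    by (simp add: Yi_T1 pochhammer_Suc algebra_simps)
  finally show ?case .
qed

lemma Yi_T1_pow_m1: "Yi (-1) ((T1^^i) a) b = s3 (fact i) (Yi (-1 - of_nat i) a b)"
  by (simp add: Yi_T1_pow pochhammer_fact)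

lemma T1_zero: "T1 0 = 0"
proof -
  have "Vector_Spaces.linear s1 s1 T1" using M1 by (simp add: va_module_def)
  then show ?thesis using module_hom.zero module_hom_iff_linear by metis
qed
lemma T1_pow_zero: "(T1^^k) 0 = 0"
  by (induction k) (simp_all add: T1_zero)

lemma trunc1: "\<exists>N::nat. \<forall>n\<ge>int N. act1 n v c = 0"
proof -
  have "truncated act1" using M1 by (simp add: va_module_def)
  then obtain N where "\<forall>n\<ge>N. act1 n v c = 0" unfolding truncated_def by blast
  then show ?thesis by (intro exI[of _ "nat N"]) auto
qed
lemma trunc2: "\<exists>N::nat. \<forall>n\<ge>int N. act2 n v c = 0"
proof -
  have "truncated act2" using M2 by (simp add: va_module_def)
  then obtain N where "\<forall>n\<ge>N. act2 n v c = 0" unfolding truncated_def by blast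
  then show ?thesis by (intro exI[of _ "nat N"]) auto
qed

lemma TV_eq: "TV v = Y (-2) v vac"
proof -
  have "TV (Y (-1) v vac) - Y (-1) v (TV vac) = sV (- of_int (-1)) (Y (-1 - 1) v vac)"
    using VA unfolding vertex_algebra_def by blast
  moreover have "Y (-1) v vac = v" "TV vac = 0" using VA by (auto simp: vertex_algebra_def)
  ultimately show ?thesis by (simp add: module_hom.zero[OF Y_hom_r])
qed

lemma act3_vac: "act3 n vac c = (if n = -1 then c else 0)"
  using M3 by (simp add: va_module_def)

lemma M3_borch: "borcherds s3 Y act3 act3 act3" using M3 by (simp add: va_module_def)
lemma I_borch: "borcherds s3 act1 act2 act3 Yi" using I by (simp add: intertwining_def)

lemma act3_TV: "act3 k (TV v) c = s3 (- of_int k) (act3 (k - 1) v c)"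
proof -
  have B: "(\<Sum>j::nat. s3 ((-1)^j * (of_int (-2) gchoose j))
           (act3 (0 + -2 - int j) v (act3 (k + of_nat j) vac c)
            - s3 ((-1)^(nat \<bar>-2\<bar>)) (act3 (of_int (-2) + k - of_nat j) vac (act3 (0 + int j) v c))))
     = (\<Sum>j::nat. s3 (of_int 0 gchoose j) (act3 (of_int 0 + k - of_nat j) (Y (-2 + int j) v vac) c))"
    using M3_borch unfolding borcherds_def by blast
  have R: "(\<Sum>j::nat. s3 (of_int 0 gchoose j) (act3 (of_int 0 + k - of_nat j) (Y (-2 + int j) v vac) c))
      = act3 k (TV v) c"
  proof -
    have "(\<lambda>j::nat. s3 (of_int 0 gchoose j) (act3 (of_int 0 + k - of_nat j) (Y (-2 + int j) v vac) c))
       = (\<lambda>j. if j = 0 then act3 k (TV v) c else 0)"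
      by (auto simp: fun_eq_iff gbinomial_0_left TV_eq)
    note eq = this
    show ?thesis by (subst eq) simp
  qed
  have L: "(\<lambda>j::nat. s3 ((-1)^j * (of_int (-2) gchoose j))
           (act3 (0 + -2 - int j) v (act3 (k + of_nat j) vac c)
            - s3 ((-1)^(nat \<bar>-2\<bar>)) (act3 (of_int (-2) + k - of_nat j) vac (act3 (0 + int j) v c))))
     = (\<lambda>j. s3 (of_nat j + 1) ((if k + int j = -1 then act3 (-2 - int j) v c else 0)
              - (if k - int j = 1 then act3 (int j) v c else 0)))"
    using gch_m2 by (auto simp: fun_eq_iff act3_vac act3_r)
  consider "k \<le> -1" | "k = 0" | "k \<ge> 1" by linarith
  then show ?thesis
  proof cases
    case 1
    have "(\<lambda>j. s3 (of_nat j + 1) ((if k + int j = -1 then act3 (-2 - int j) v c else 0)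
              - (if k - int j = 1 then act3 (int j) v c else 0)))
       = (\<lambda>j. if j = nat (-1-k) then s3 (- of_int k) (act3 (k - 1) v c) else 0)"
      using 1 by (auto simp: fun_eq_iff of_nat_nat)
    note E = this
    show ?thesis using B[unfolded L E] R by simp
  next
    case 2
    have "(\<lambda>j. s3 (of_nat j + 1) ((if k + int j = -1 then act3 (-2 - int j) v c else 0)
              - (if k - int j = 1 then act3 (int j) v c else 0))) = (\<lambda>j. 0)"
      using 2 by (auto simp: fun_eq_iff)
    note E = this
    show ?thesis using B[unfolded L E] R 2 by simp
  next
    case 3
    have "(\<lambda>j. s3 (of_nat j + 1) ((if k + int j = -1 then act3 (-2 - int j) v c else 0)
              - (if k - int j = 1 then act3 (int j) v c else 0)))
       = (\<lambda>j. if j = nat (k-1) then s3 (- of_int k) (act3 (k - 1) v c) else 0)"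
      using 3 by (auto simp: fun_eq_iff of_nat_nat)
    note E = this
    show ?thesis using B[unfolded L E] R by simp
  qed
qed

end



lemma sum_atMost_rev_nat: "(\<Sum>r\<le>j. f r) = (\<Sum>k\<le>(j::nat). (f::nat \<Rightarrow> 'a::comm_monoid_add) (j - k))"
proof -
  have "(\<Sum>k<Suc j. f (Suc j - Suc k)) = (\<Sum>k<Suc j. f k)" by (rule sum.nat_diff_reindex)
  then show ?thesis by (simp add: lessThan_Suc_atMost)
qed

lemma W_vii:
  fixes e :: complex
  shows "(\<Sum>r\<le>j. (1 / (e - of_nat r)) * rGamma (e - of_nat r) * ((-1)^j * of_nat (j choose r) / fact j)
            * pochhammer (1 + of_nat r - e) (j - r))
     = (if e - 1 - of_nat j \<in> {of_int k |k. k < 0} then 0 else (-1)^j * rGamma (e + 1))"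
proof -
  define x where "x = e - of_nat j"
  have "(\<Sum>r\<le>j. (1 / (e - of_nat r)) * rGamma (e - of_nat r) * ((-1)^j * of_nat (j choose r) / fact j)
            * pochhammer (1 + of_nat r - e) (j - r))
      = (\<Sum>k\<le>j. (1 / (e - of_nat (j - k))) * rGamma (e - of_nat (j - k)) * ((-1)^j * of_nat (j choose (j - k)) / fact j)
            * pochhammer (1 + of_nat (j - k) - e) (j - (j - k)))"
    by (rule sum_atMost_rev_nat)
  also have "\<dots> = (\<Sum>k\<le>j. (-1)^j / fact j * (of_nat (j choose k) * (-1)^k * pochhammer x k * (rGamma (x + of_nat k) / (x + of_nat k))))"
  proof (rule sum.cong[OF refl])
    fix k assume k: "k \<in> {..j}"
    then have kj: "k \<le> j" by simp
    have a1: "e - of_nat (j - k) = x + of_nat k" using kj by (simp add: x_def of_nat_diff)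
    have a2: "1 + of_nat (j - k) - e = 1 - x - of_nat k" using kj by (simp add: x_def of_nat_diff)
    have a3: "j - (j - k) = k" using kj by simp
    have a4: "j choose (j - k) = j choose k" using kj by (rule binomial_symmetric[symmetric])
    show "(1 / (e - of_nat (j - k))) * rGamma (e - of_nat (j - k)) * ((-1)^j * of_nat (j choose (j - k)) / fact j)
            * pochhammer (1 + of_nat (j - k) - e) (j - (j - k))
        = (-1)^j / fact j * (of_nat (j choose k) * (-1)^k * pochhammer x k * (rGamma (x + of_nat k) / (x + of_nat k)))"
      unfolding a1 a2 a3 a4 poch_neg_shift by (simp add: field_simps)
  qed
  also have "\<dots> = (-1)^j / fact j * (if x \<in> \<int>\<^sub>\<le>\<^sub>0 then 0 else fact j * rGamma (x + of_nat (Suc j)))"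
    by (simp only: sum_distrib_left[symmetric] Fs_sum)
  also have "\<dots> = (if e - 1 - of_nat j \<in> {of_int k |k. k < 0} then 0 else (-1)^j * rGamma (e + 1))"
  proof -
    have h1: "x + of_nat (Suc j) = e + 1" by (simp add: x_def)
    have h2: "x \<in> \<int>\<^sub>\<le>\<^sub>0 \<longleftrightarrow> e - 1 - of_nat j \<in> {of_int k |k. k < 0}"
      unfolding NI_iff x_def by (simp add: algebra_simps)
    show ?thesis by (simp only: h1 h2) auto
  qed
  finally show ?thesis .
qed

lemma W_vi:
  fixes n :: complex
  shows "(\<Sum>q\<le>j. 1 / (n + of_nat q + 1) * rGamma (n + 1) * ((-1)^q * rGamma (of_nat (j - q) + 1) * rGamma (of_nat q + 1)))
     = (if n \<in> {of_int k |k. k < 0} then 0 else rGamma (n + of_nat j + 2))"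
proof -
  define x where "x = n + 1"
  have "(\<Sum>q\<le>j. 1 / (n + of_nat q + 1) * rGamma (n + 1) * ((-1)^q * rGamma (of_nat (j - q) + 1) * rGamma (of_nat q + 1)))
      = (\<Sum>q\<le>j. 1 / fact j * (of_nat (j choose q) * (-1)^q * pochhammer x q * (rGamma (x + of_nat q) / (x + of_nat q))))"
  proof (rule sum.cong[OF refl])
    fix q assume "q \<in> {..j}"
    then have qj: "q \<le> j" by simp
    have p: "pochhammer x q * rGamma (x + of_nat q) = rGamma x" by (simp add: pochhammer_rGamma[of x q])
    have "1 / fact j * (of_nat (j choose q) * (-1)^q * pochhammer x q * (rGamma (x + of_nat q) / (x + of_nat q)))
        = 1 / fact j * of_nat (j choose q) * (-1)^q * (pochhammer x q * rGamma (x + of_nat q)) / (x + of_nat q)"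
      by (simp add: field_simps)
    also have "\<dots> = 1 / fact j * of_nat (j choose q) * (-1)^q * rGamma x / (x + of_nat q)" by (simp add: p)
    also have "\<dots> = 1 / (n + of_nat q + 1) * rGamma (n + 1) * ((-1)^q * rGamma (of_nat (j - q) + 1) * rGamma (of_nat q + 1))"
      using qj unfolding rGamma_nat1 binomial_fact[OF qj] x_def by (simp add: field_simps)
    finally show "1 / (n + of_nat q + 1) * rGamma (n + 1) * ((-1)^q * rGamma (of_nat (j - q) + 1) * rGamma (of_nat q + 1))
       = 1 / fact j * (of_nat (j choose q) * (-1)^q * pochhammer x q * (rGamma (x + of_nat q) / (x + of_nat q)))" ..
  qed
  also have "\<dots> = 1 / fact j * (if x \<in> \<int>\<^sub>\<le>\<^sub>0 then 0 else fact j * rGamma (x + of_nat (Suc j)))"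
    by (simp only: sum_distrib_left[symmetric] Fs_sum)
  also have "\<dots> = (if n \<in> {of_int k |k. k < 0} then 0 else rGamma (n + of_nat j + 2))"
  proof -
    have h1: "x + of_nat (Suc j) = n + of_nat j + 2" by (simp add: x_def)
    have h2: "x \<in> \<int>\<^sub>\<le>\<^sub>0 \<longleftrightarrow> n \<in> {of_int k |k. k < 0}"
      unfolding NI_iff x_def by simp
    show ?thesis by (simp only: h1 h2) auto
  qed
  finally show ?thesis .
qed




lemma nat_floor_Re_nat [simp]: "nat \<lfloor>Re (of_nat r :: complex)\<rfloor> = r"
  by (metis Re_complex_of_real floor_of_nat nat_int of_real_of_nat_eq)

lemma floor_Re_nat [simp]: "\<lfloor>Re (of_nat r :: complex)\<rfloor> = int r"
  by (metis Re_complex_of_real floor_of_nat of_real_of_nat_eq)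


lemma NI_notnat_rG: "(e::complex) \<notin> \<nat> \<Longrightarrow> e - 1 - of_nat j \<in> {of_int k |k. k < 0} \<Longrightarrow> rGamma (e + 1) = 0"
proof -
  assume ne: "e \<notin> \<nat>" and "e - 1 - of_nat j \<in> {of_int k |k. k < 0}"
  then obtain k where k: "e - 1 - of_nat j = of_int k" "k < 0" by auto
  then have e: "e = of_int (k + 1 + int j)" by (simp add: algebra_simps)
  have "\<not> (k + 1 + int j \<ge> 0)"
  proof
    assume "k + 1 + int j \<ge> 0"
    then have "e = of_nat (nat (k + 1 + int j))" using e by simp
    with ne show False by simp
  qed
  then have "e + 1 = of_int (k + 2 + int j)" "k + 2 + int j \<le> 0" using e by auto
  then show ?thesis by (metis rGamma_nonpos_Int nonpos_Ints_of_int)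
qed

lemma NI_nat_iff: "(of_nat r - 1 - of_nat j :: complex) \<in> {of_int k |k. k < 0} \<longleftrightarrow> r \<le> j"
proof -
  have "(of_nat r - 1 - of_nat j :: complex) = of_int (int r - 1 - int j)" by simp
  then show ?thesis using ofint_NI[of "int r - 1 - int j"] by auto
qed

context ctx begin

lemma Yi_sum_l: "Yi n (sum g A) y = (\<Sum>x\<in>A. Yi n (g x) y)"
  by (rule module_hom.sum[OF Yi_hom_l])

lemma gch_m1': "((-1::complex) gchoose j) = (-1)^j"
  using gch_m1[of j] by (metis mult.left_neutral power_minus1_even power_mult_distrib mult.assoc mult_minus1 power2_eq_square power_even_eq power_one)

lemma ibr_rev_nat:
  assumes N: "\<forall>n\<ge>int N. act1 n v a = 0"
  shows "ibr_rev s1 T1 act1 a v (of_nat r) = - (\<Sum>j<N. if r \<le> j then s1 ((-1)^j * of_nat (j choose r) / fact j)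
            ((T1^^(j - r)) (act1 (int j) v a)) else 0)"
proof -
  have "(\<Sum>j. if r \<le> j then s1 ((-1)^j * of_nat (j choose r) / fact j) ((T1^^(j - r)) (act1 (int j) v a)) else 0)
      = (\<Sum>j<N. if r \<le> j then s1 ((-1)^j * of_nat (j choose r) / fact j) ((T1^^(j - r)) (act1 (int j) v a)) else 0)"
    by (rule Sum_any.expand_superset) (auto, metis N T1_pow_zero not_less of_nat_le_iff)
  then show ?thesis by (simp add: ibr_rev_def cong: if_cong)
qed

lemma part_vii: "ibr s3 Yi a (act2 (-1) v b)
      = (\<lambda>p. act3 (-1) v (ibr s3 Yi a b p) + Yi (-1) (ibr_rev s1 T1 act1 a v p) b
             + fint s3 (\<lambda>p' q. ibr s3 Yi (ibr_rev s1 T1 act1 a v p') b q) p)"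
proof (rule ext)
  fix e :: complex
  obtain N where N: "\<forall>n\<ge>int N. act1 n v a = 0" using trunc1 by blast
  define Z where "Z j = Yi (e - 1 - of_nat j) (act1 (int j) v a) b" for j
  define rG where "rG = rGamma (e + 1)"
  define NI where "NI = ({of_int k |k. k < 0} :: complex set)"
  have Bo: "(\<Sum>j::nat. s3 ((-1)^j * (of_int 0 gchoose j))
           (act3 (-1 + 0 - int j) v (Yi (e + of_nat j) a b)
            - s3 ((-1)^(nat \<bar>0\<bar>)) (Yi (of_int 0 + e - of_nat j) a (act2 (-1 + int j) v b))))
       = (\<Sum>j::nat. s3 (of_int (-1) gchoose j) (Yi (of_int (-1) + e - of_nat j) (act1 (0 + int j) v a) b))"
    using I_borch unfolding borcherds_def by blast
  have "(\<lambda>j::nat. s3 ((-1)^j * (of_int 0 gchoose j))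
           (act3 (-1 + 0 - int j) v (Yi (e + of_nat j) a b)
            - s3 ((-1)^(nat \<bar>0\<bar>)) (Yi (of_int 0 + e - of_nat j) a (act2 (-1 + int j) v b))))
       = (\<lambda>j. if j = 0 then act3 (-1) v (Yi e a b) - Yi e a (act2 (-1) v b) else 0)"
    by (auto simp: fun_eq_iff gbinomial_0_left)
  note E1 = this
  have "(\<lambda>j::nat. s3 (of_int (-1) gchoose j) (Yi (of_int (-1) + e - of_nat j) (act1 (0 + int j) v a) b))
       = (\<lambda>j. if j \<in> {..<N} then s3 ((-1)^j) (Z j) else 0)"
  proof (rule ext)
    fix j
    show "s3 (of_int (-1) gchoose j) (Yi (of_int (-1) + e - of_nat j) (act1 (0 + int j) v a) b)
       = (if j \<in> {..<N} then s3 ((-1)^j) (Z j) else 0)"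
      using N by (auto simp: Z_def gch_m1' algebra_simps Yi_l)
  qed
  note E2 = this
  have C: "(\<Sum>j<N. s3 ((-1)^j) (Z j)) = Sum_any (\<lambda>j. if j \<in> {..<N} then s3 ((-1)^j) (Z j) else 0)"
    by (rule Sum_any.conditionalize) simp
  have key: "act3 (-1) v (Yi e a b) - Yi e a (act2 (-1) v b) = (\<Sum>j<N. s3 ((-1)^j) (Z j))"
    using Bo unfolding E1 E2 C by simp
  have R: "Yi (-1) (ibr_rev s1 T1 act1 a v e) b
      = - (\<Sum>j<N. if e - 1 - of_nat j \<in> NI then s3 ((-1)^j * rG) (Z j) else 0)"
  proof (cases "e \<in> \<nat>")
    case False
    have "ibr_rev s1 T1 act1 a v e = 0" using False by (simp add: ibr_rev_def)
    moreover have "(\<Sum>j<N. if e - 1 - of_nat j \<in> NI then s3 ((-1)^j * rG) (Z j) else 0) = 0"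
      using NI_notnat_rG[OF False] by (auto simp: NI_def rG_def intro!: sum.neutral)
    ultimately show ?thesis by (simp add: Yi_l)
  next
    case True
    then obtain r where e: "e = of_nat r" by (auto elim: Nats_cases)
    have "Yi (-1) (ibr_rev s1 T1 act1 a v e) b
        = - (\<Sum>j<N. Yi (-1) (if r \<le> j then s1 ((-1)^j * of_nat (j choose r) / fact j)
            ((T1^^(j - r)) (act1 (int j) v a)) else 0) b)"
      unfolding e ibr_rev_nat[OF N] by (simp add: Yi_l Yi_sum_l)
    also have "\<dots> = - (\<Sum>j<N. if e - 1 - of_nat j \<in> NI then s3 ((-1)^j * rG) (Z j) else 0)"
    proof -
      have "Yi (-1) (if r \<le> j then s1 ((-1)^j * of_nat (j choose r) / fact j)
            ((T1^^(j - r)) (act1 (int j) v a)) else 0) b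
          = (if e - 1 - of_nat j \<in> NI then s3 ((-1)^j * rG) (Z j) else 0)" for j
      proof (cases "r \<le> j")
        case True
        have i1: "-1 - of_nat (j - r) = e - 1 - (of_nat j :: complex)" using True by (simp add: e of_nat_diff)
        have i2: "(-1)^j * of_nat (j choose r) / fact j * fact (j - r) = (-1)^j * rG"
          using True unfolding rG_def e rGamma_nat1 by (simp add: binomial_fact field_simps)
        have c: "e - 1 - of_nat j \<in> NI" using True unfolding NI_def e NI_nat_iff .
        have "Yi (-1) (s1 ((-1)^j * of_nat (j choose r) / fact j) ((T1^^(j - r)) (act1 (int j) v a))) b
            = s3 ((-1)^j * of_nat (j choose r) / fact j * fact (j - r)) (Yi (-1 - of_nat (j - r)) (act1 (int j) v a) b)"
          by (simp add: Yi_l Yi_T1_pow_m1)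
        also have "\<dots> = s3 ((-1)^j * rG) (Z j)" unfolding i1 i2 Z_def ..
        finally show ?thesis using True c by simp
      next
        case False
        then have "e - 1 - of_nat j \<notin> NI" unfolding NI_def e NI_nat_iff by simp
        then show ?thesis using False by (simp add: Yi_l)
      qed
      then show ?thesis by simp
    qed
    finally show ?thesis .
  qed
  have F: "fint s3 (\<lambda>p' q. ibr s3 Yi (ibr_rev s1 T1 act1 a v p') b q) e
      = - (\<Sum>j<N. if e - 1 - of_nat j \<in> NI then 0 else s3 ((-1)^j * rG) (Z j))"
  proof -
    define g where "g c = (if c \<in> NI then 0 else s3 (1 / (c + 1)) (ibr s3 Yi (ibr_rev s1 T1 act1 a v (e - c - 1)) b c))" for c
    define w where "w j r = (1 / (e - of_nat r)) * rGamma (e - of_nat r) * ((-1)^j * of_nat (j choose r) / fact j)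
            * pochhammer (1 + of_nat r - e) (j - r)" for j r :: nat
    have f1: "fint s3 (\<lambda>p' q. ibr s3 Yi (ibr_rev s1 T1 act1 a v p') b q) e = Sum_any g"
      unfolding fint_def g_def NI_def ..
    have big: "ibr_rev s1 T1 act1 a v (of_nat r) = 0" if "r \<ge> N" for r
      using that unfolding ibr_rev_nat[OF N] by (auto intro!: sum.neutral)
    have sub: "{c. g c \<noteq> 0} \<subseteq> (\<lambda>r. e - 1 - of_nat r) ` {..<N}"
    proof
      fix c assume "c \<in> {c. g c \<noteq> 0}"
      then have nz: "ibr_rev s1 T1 act1 a v (e - c - 1) \<noteq> 0"
        by (auto simp: g_def ibr_def Yi_l split: if_splits)
      then have "e - c - 1 \<in> \<nat>" unfolding ibr_rev_def by (auto split: if_splits)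
      then obtain r where r: "e - c - 1 = of_nat r" by (auto elim: Nats_cases)
      have "r < N" using nz big[of r] r by (cases "r < N") auto
      moreover have "c = e - 1 - of_nat r" using r by (simp add: algebra_simps)
      ultimately show "c \<in> (\<lambda>r. e - 1 - of_nat r) ` {..<N}" by auto
    qed
    have inj: "inj_on (\<lambda>r. e - 1 - of_nat r) {..<N}" by (auto simp: inj_on_def)
    have f2: "Sum_any g = (\<Sum>r<N. g (e - 1 - of_nat r))"
      by (subst Sum_any.expand_superset[OF _ sub]) (simp_all add: sum.reindex[OF inj])
    have f3: "g (e - 1 - of_nat r) = - (\<Sum>j<N. if r \<le> j then s3 (w j r) (Z j) else 0)" for r
    proof -
      define c where "c = e - 1 - of_nat r"
      have c1: "e - c - 1 = of_nat r" "c + 1 = e - of_nat r" "- c = 1 + of_nat r - e" by (simp_all add: c_def)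
      have "g c = s3 (1 / (c + 1) * rGamma (c + 1)) (Yi c (ibr_rev s1 T1 act1 a v (of_nat r)) b)"
        using NI_rGamma[of c] unfolding g_def c1(1) NI_def by (auto simp: ibr_def)
      also have "\<dots> = s3 (1 / (c + 1) * rGamma (c + 1)) (- (\<Sum>j<N. if r \<le> j then
           s3 ((-1)^j * of_nat (j choose r) / fact j) (s3 (pochhammer (- c) (j - r)) (Yi (c - of_nat (j - r)) (act1 (int j) v a) b)) else 0))"
      proof -
        have per: "Yi c (if r \<le> j then s1 ((-1)^j * of_nat (j choose r) / fact j) ((T1^^(j - r)) (act1 (int j) v a)) else 0) b
           = (if r \<le> j then s3 ((-1)^j * of_nat (j choose r) / fact j) (s3 (pochhammer (- c) (j - r)) (Yi (c - of_nat (j - r)) (act1 (int j) v a) b)) else 0)" for j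
          by (cases "r \<le> j") (simp_all add: Yi_l Yi_T1_pow del: of_nat_diff)
        show ?thesis unfolding ibr_rev_nat[OF N] Yi_l(4) Yi_sum_l per ..
      qed
      also have "\<dots> = - (\<Sum>j<N. if r \<le> j then s3 (w j r) (Z j) else 0)"
      proof -
        have "s3 (1 / (c + 1) * rGamma (c + 1)) (if r \<le> j then
           s3 ((-1)^j * of_nat (j choose r) / fact j) (s3 (pochhammer (- c) (j - r)) (Yi (c - of_nat (j - r)) (act1 (int j) v a) b)) else 0)
          = (if r \<le> j then s3 (w j r) (Z j) else 0)" for j
        proof (cases "r \<le> j")
          case True
          have idx: "c - of_nat (j - r) = e - 1 - of_nat j" using True by (simp add: c_def of_nat_diff)
          show ?thesis using True unfolding idx by (simp add: Z_def w_def c1 mult_ac)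
        qed simp
        then show ?thesis by (simp add: W3.scale_sum_right)
      qed
      finally show ?thesis unfolding c_def .
    qed
    have f4: "(\<Sum>r<N. g (e - 1 - of_nat r)) = - (\<Sum>j<N. s3 (\<Sum>r\<le>j. w j r) (Z j))"
    proof -
      have "(\<Sum>r<N. g (e - 1 - of_nat r)) = - (\<Sum>r<N. \<Sum>j<N. if r \<le> j then s3 (w j r) (Z j) else 0)"
        by (simp add: f3 sum_negf)
      also have "\<dots> = - (\<Sum>j<N. \<Sum>r<N. if r \<le> j then s3 (w j r) (Z j) else 0)"
        by (subst sum.swap) simp
      also have "\<dots> = - (\<Sum>j<N. s3 (\<Sum>r\<le>j. w j r) (Z j))"
      proof -
        have "(\<Sum>r<N. if r \<le> j then s3 (w j r) (Z j) else 0) = s3 (\<Sum>r\<le>j. w j r) (Z j)" if j: "j < N" for j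
        proof -
          have "(\<Sum>r<N. if r \<le> j then s3 (w j r) (Z j) else 0) = (\<Sum>r\<in>{..<N} \<inter> {r. r \<le> j}. s3 (w j r) (Z j))"
            by (simp add: sum.inter_restrict)
          also have "{..<N} \<inter> {r. r \<le> j} = {..j}" using j by auto
          finally show ?thesis by (simp add: W3.scale_sum_left)
        qed
        then show ?thesis by simp
      qed
      finally show ?thesis .
    qed
    have f5: "(\<Sum>r\<le>j. w j r) = (if e - 1 - of_nat j \<in> NI then 0 else (-1)^j * rG)" for j
      unfolding w_def NI_def rG_def by (rule W_vii)
    show ?thesis unfolding f1 f2 f4 f5 by (simp, rule sum.cong) auto
  qed
  have RF: "Yi (-1) (ibr_rev s1 T1 act1 a v e) b + fint s3 (\<lambda>p' q. ibr s3 Yi (ibr_rev s1 T1 act1 a v p') b q) e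
      = - (\<Sum>j<N. s3 ((-1)^j * rG) (Z j))"
  proof -
    have "(\<Sum>j<N. if e - 1 - of_nat j \<in> NI then s3 ((-1)^j * rG) (Z j) else 0)
        + (\<Sum>j<N. if e - 1 - of_nat j \<in> NI then 0 else s3 ((-1)^j * rG) (Z j))
        = (\<Sum>j<N. s3 ((-1)^j * rG) (Z j))"
      by (simp add: sum.distrib[symmetric]) (rule sum.cong, auto)
    note H = this
    show ?thesis unfolding R F H[symmetric] by simp
  qed
  have "ibr s3 Yi a (act2 (-1) v b) e = s3 rG (Yi e a (act2 (-1) v b))"
    by (simp add: ibr_def rG_def)
  also have "\<dots> = s3 rG (act3 (-1) v (Yi e a b)) - (\<Sum>j<N. s3 ((-1)^j * rG) (Z j))"
    using key by (simp add: W3.scale_right_diff_distrib W3.scale_sum_right algebra_simps eq_diff_eq)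
  also have "\<dots> = act3 (-1) v (ibr s3 Yi a b e) + Yi (-1) (ibr_rev s1 T1 act1 a v e) b
             + fint s3 (\<lambda>p' q. ibr s3 Yi (ibr_rev s1 T1 act1 a v p') b q) e"
    using RF by (simp add: ibr_def rG_def act3_r add.assoc)
  finally show "ibr s3 Yi a (act2 (-1) v b) e = act3 (-1) v (ibr s3 Yi a b e) + Yi (-1) (ibr_rev s1 T1 act1 a v e) b
             + fint s3 (\<lambda>p' q. ibr s3 Yi (ibr_rev s1 T1 act1 a v p') b q) e" .
qed

end



lemma Nats_sum3: "(c::complex) \<in> \<nat> \<Longrightarrow> e - c - 1 \<in> \<nat> \<Longrightarrow> e \<in> \<nat>"
proof -
  assume "c \<in> \<nat>" "e - c - 1 \<in> \<nat>"
  then have "c + (e - c - 1) + 1 \<in> \<nat>" by (intro Nats_add Nats_1)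
  then show ?thesis by simp
qed

lemma Nats_diff_cases:
  assumes "(c::complex) \<in> \<nat>" "of_nat M - c - 1 \<in> \<nat>"
  obtains i where "i < M" "c = of_nat i" "of_nat M - c - 1 = of_nat (M - 1 - i)"
proof -
  obtain i where i: "c = of_nat i" using assms(1) by (auto elim: Nats_cases)
  obtain r where r: "of_nat M - c - 1 = (of_nat r :: complex)" using assms(2) by (auto elim: Nats_cases)
  then have "of_nat M = (of_nat (i + r + 1) :: complex)" using i by (simp add: algebra_simps)
  then have M: "M = i + r + 1" using of_nat_eq_iff by blast
  show ?thesis by (rule that[of i]) (use i r M in auto)
qed

context ctx begin

lemma part_v: "lbr s3 act3 v (Yi (-1) a b)
      = (\<lambda>p. Yi (-1) a (lbr s2 act2 v b p) + Yi (-1) (lbr s1 act1 v a p) b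
             + fint s3 (\<lambda>p' q. ibr0 s3 Yi (lbr s1 act1 v a p') b q) p)"
proof (rule ext)
  fix e :: complex
  show "lbr s3 act3 v (Yi (-1) a b) e = Yi (-1) a (lbr s2 act2 v b e) + Yi (-1) (lbr s1 act1 v a e) b
             + fint s3 (\<lambda>p' q. ibr0 s3 Yi (lbr s1 act1 v a p') b q) e"
  proof (cases "e \<in> \<nat>")
    case False
    have "(\<lambda>c. if c \<in> {of_int k |k. k < 0} then 0 else s3 (1 / (c + 1)) (ibr0 s3 Yi (lbr s1 act1 v a (e - c - 1)) b c))
        = (\<lambda>c. 0)"
    proof (rule ext)
      fix c
      have "lbr s1 act1 v a (e - c - 1) = 0 \<or> c \<notin> \<nat>" using Nats_sum3[of c e] False by (auto simp: lbr_def)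
      then show "(if c \<in> {of_int k |k. k < 0} then 0 else s3 (1 / (c + 1)) (ibr0 s3 Yi (lbr s1 act1 v a (e - c - 1)) b c)) = 0"
        by (auto simp: ibr0_def Yi_l)
    qed
    note Z = this
    have "fint s3 (\<lambda>p' q. ibr0 s3 Yi (lbr s1 act1 v a p') b q) e = 0"
      unfolding fint_def Z by simp
    then show ?thesis using False by (simp add: lbr_def Yi_r Yi_l)
  next
    case True
    then obtain M where e: "e = of_nat M" by (auto elim: Nats_cases)
    define YY where "YY j = Yi (of_nat M - 1 - of_nat j) (act1 (int j) v a) b" for j
    have Bo: "(\<Sum>j::nat. s3 ((-1)^j * (of_int 0 gchoose j))
           (act3 (int M + 0 - int j) v (Yi (-1 + of_nat j) a b)
            - s3 ((-1)^(nat \<bar>0\<bar>)) (Yi (of_int 0 + -1 - of_nat j) a (act2 (int M + int j) v b))))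
       = (\<Sum>j::nat. s3 (of_int (int M) gchoose j) (Yi (of_int (int M) + -1 - of_nat j) (act1 (0 + int j) v a) b))"
      using I_borch unfolding borcherds_def by blast
    have "(\<lambda>j::nat. s3 ((-1)^j * (of_int 0 gchoose j))
           (act3 (int M + 0 - int j) v (Yi (-1 + of_nat j) a b)
            - s3 ((-1)^(nat \<bar>0\<bar>)) (Yi (of_int 0 + -1 - of_nat j) a (act2 (int M + int j) v b))))
       = (\<lambda>j. if j = 0 then act3 (int M) v (Yi (-1) a b) - Yi (-1) a (act2 (int M) v b) else 0)"
      by (auto simp: fun_eq_iff gbinomial_0_left)
    note E1 = this
    have "(\<lambda>j::nat. s3 (of_int (int M) gchoose j) (Yi (of_int (int M) + -1 - of_nat j) (act1 (0 + int j) v a) b))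
       = (\<lambda>j. if j \<in> {..M} then s3 (of_nat (M choose j)) (YY j) else 0)"
      by (auto simp: fun_eq_iff YY_def binomial_gbinomial[symmetric] algebra_simps binomial_eq_0)
    note E2 = this
    have C: "(\<Sum>j\<le>M. s3 (of_nat (M choose j)) (YY j)) = Sum_any (\<lambda>j. if j \<in> {..M} then s3 (of_nat (M choose j)) (YY j) else 0)"
      by (rule Sum_any.conditionalize) simp
    have key: "act3 (int M) v (Yi (-1) a b) - Yi (-1) a (act2 (int M) v b)
        = (\<Sum>j\<le>M. s3 (of_nat (M choose j)) (YY j))"
      using Bo unfolding E1 E2 C by simp
    have F: "fint s3 (\<lambda>p' q. ibr0 s3 Yi (lbr s1 act1 v a p') b q) e
        = (\<Sum>i<M. s3 (1 / (fact (Suc i) * fact (M - 1 - i))) (YY (M - 1 - i)))"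
    proof -
      define g where "g c = (if c \<in> {of_int k |k. k < 0} then 0 else s3 (1 / (c + 1)) (ibr0 s3 Yi (lbr s1 act1 v a (e - c - 1)) b c))" for c
      have sub: "{c. g c \<noteq> 0} \<subseteq> of_nat ` {..<M}"
      proof
        fix c assume "c \<in> {c. g c \<noteq> 0}"
        then have "c \<in> \<nat>" "of_nat M - c - 1 \<in> \<nat>"
          by (auto simp: g_def ibr0_def lbr_def e Yi_l split: if_splits)
        then show "c \<in> of_nat ` {..<M}" by (rule Nats_diff_cases) auto
      qed
      have "fint s3 (\<lambda>p' q. ibr0 s3 Yi (lbr s1 act1 v a p') b q) e = Sum_any g"
        unfolding fint_def g_def ..
      also have "\<dots> = sum g (of_nat ` {..<M})" by (rule Sum_any.expand_superset[OF _ sub]) simp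
      also have "\<dots> = (\<Sum>i<M. g (of_nat i))" by (subst sum.reindex) (auto simp: inj_on_def)
      also have "\<dots> = (\<Sum>i<M. s3 (1 / (fact (Suc i) * fact (M - 1 - i))) (YY (M - 1 - i)))"
      proof (rule sum.cong[OF refl])
        fix i assume i: "i \<in> {..<M}"
        have n1: "(of_nat i :: complex) \<notin> {of_int k |k. k < 0}" by (rule ofnat_notNI)
        have d: "e - of_nat i - 1 = of_nat (M - 1 - i)" using i by (simp add: e of_nat_diff)
        have d2: "of_nat M - 1 - of_nat (M - Suc i) = (of_nat i :: complex)" using i by (simp add: of_nat_diff)
        have d3: "of_nat M - (1 + of_nat (M - Suc i)) = (of_nat i :: complex)" using i by (simp add: of_nat_diff)
        have "g (of_nat i) = s3 (1 / (of_nat i + 1)) (s3 (rGamma (of_nat i + 1))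
            (Yi (of_nat i) (s1 (rGamma (of_nat (M - 1 - i) + 1)) (act1 (int (M - 1 - i)) v a)) b))"
          unfolding g_def if_not_P[OF n1] ibr0_def lbr_def d by simp
        also have "\<dots> = s3 (1 / (fact (Suc i) * fact (M - 1 - i))) (YY (M - 1 - i))"
          by (simp add: YY_def d2 d3 Yi_l rGamma_nat1) (simp add: field_simps d3)
        finally show "g (of_nat i) = s3 (1 / (fact (Suc i) * fact (M - 1 - i))) (YY (M - 1 - i))" .
      qed
      finally show ?thesis .
    qed
    have F2: "(\<Sum>i<M. s3 (1 / (fact (Suc i) * fact (M - 1 - i))) (YY (M - 1 - i)))
        = (\<Sum>j<M. s3 (1 / (fact (M - j) * fact j)) (YY j))"
    proof -
      have "(\<Sum>i<M. s3 (1 / (fact (Suc i) * fact (M - 1 - i))) (YY (M - 1 - i)))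
          = (\<Sum>j<M. s3 (1 / (fact (Suc (M - Suc j)) * fact (M - 1 - (M - Suc j)))) (YY (M - 1 - (M - Suc j))))"
        by (subst sum.nat_diff_reindex[symmetric]) simp
      also have "\<dots> = (\<Sum>j<M. s3 (1 / (fact (M - j) * fact j)) (YY j))"
        by (rule sum.cong) (auto simp: Suc_diff_Suc)
      finally show ?thesis .
    qed
    have lhs: "lbr s3 act3 v (Yi (-1) a b) e = s3 (1 / fact M) (act3 (int M) v (Yi (-1) a b))"
      by (simp add: lbr_def e rGamma_nat1 divide_inverse)
    have r1: "Yi (-1) a (lbr s2 act2 v b e) = s3 (1 / fact M) (Yi (-1) a (act2 (int M) v b))"
      by (simp add: lbr_def e rGamma_nat1 divide_inverse Yi_r)
    have r2: "Yi (-1) (lbr s1 act1 v a e) b = s3 (1 / fact M) (YY M)"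
      by (simp add: lbr_def e rGamma_nat1 divide_inverse Yi_l YY_def)
    have "s3 (1 / fact M) (\<Sum>j\<le>M. s3 (of_nat (M choose j)) (YY j))
       = s3 (1 / fact M) (YY M) + (\<Sum>j<M. s3 (1 / (fact (M - j) * fact j)) (YY j))"
    proof -
      have "s3 (1 / fact M) (\<Sum>j\<le>M. s3 (of_nat (M choose j)) (YY j))
          = (\<Sum>j\<le>M. s3 (1 / (fact (M - j) * fact j)) (YY j))"
        by (auto simp: W3.scale_sum_right binomial_fact field_simps intro!: sum.cong)
      also have "\<dots> = s3 (1 / fact M) (YY M) + (\<Sum>j<M. s3 (1 / (fact (M - j) * fact j)) (YY j))"
        by (simp add: lessThan_Suc_atMost[symmetric])
      finally show ?thesis .
    qed
    then show ?thesis
      using key unfolding lhs r1 r2 F F2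
      by (simp add: W3.scale_right_diff_distrib algebra_simps)
  qed
qed

end



context ctx begin

lemma act3_TV_pow: "act3 k ((TV^^i) v) c = s3 (pochhammer (- of_int k) i) (act3 (k - int i) v c)"
proof (induction i arbitrary: v)
  case 0 then show ?case by simp
next
  case (Suc i)
  have "act3 k ((TV^^Suc i) v) c = act3 k ((TV^^i) (TV v)) c" by (simp add: funpow_swap1)
  also have "\<dots> = s3 (pochhammer (- of_int k) i) (act3 (k - int i) (TV v) c)" by (rule Suc.IH)
  also have "\<dots> = s3 (pochhammer (- of_int k) (Suc i)) (act3 (k - int (Suc i)) v c)"
    by (simp add: act3_TV pochhammer_Suc algebra_simps)
  finally show ?case .
qed

lemma act3_scale_l: "act3 n (sV r w) c = s3 r (act3 n w c)"
  using module_hom.scale[OF act3_hom_l] by simp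

lemma Yi_bound: "\<exists>K::nat. \<forall>j\<ge>K. Yi (e + of_nat j) a b = 0"
proof -
  obtain D where D: "finite D" "\<forall>n. Yi n a b \<noteq> 0 \<longrightarrow> (\<exists>d\<in>D. \<exists>k::nat. n = d - 1 - of_nat k)"
    using I unfolding intertwining_def by blast
  define R where "R = Max (insert 0 (Re ` D))"
  have R: "Re d \<le> R" if "d \<in> D" for d
    unfolding R_def using D(1) that by (intro Max_ge) auto
  have lt: "Re n < R" if nz: "Yi n a b \<noteq> 0" for n
  proof -
    obtain d k where "d \<in> D" "n = d - 1 - of_nat (k::nat)" using D(2) nz by blast
    then show ?thesis using R[of d] by simp
  qed
  show ?thesis
  proof (intro exI allI impI)
    fix j assume j: "j \<ge> nat \<lceil>R - Re e\<rceil>"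
    then have "real j \<ge> R - Re e" by linarith
    then have "\<not> Re (e + of_nat j) < R" by simp
    then show "Yi (e + of_nat j) a b = 0" using lt by blast
  qed
qed

lemma part_vi: "ibr s3 Yi (act1 (-1) v a) b
      = (\<lambda>p. eTd sV s3 (act3 (-1)) TV v (ibr s3 Yi a b) p
             + eTd s1 s2 (Yi (-1)) T1 a (lbr s2 act2 v b) p
             + fint s3 (ibr_mu s3 Yi a (lbr_diff s2 act2 v b)) p)"
proof (rule ext)
  fix e :: complex
  obtain N where N: "\<forall>n\<ge>int N. act2 n v b = 0" using trunc2 by blast
  obtain K where K: "\<forall>j\<ge>K. Yi (e + of_nat j) a b = 0" using Yi_bound by blast
  define U where "U j = act3 (-1 - int j) v (Yi (e + of_nat j) a b)" for j
  define W where "W j = Yi (e - 1 - of_nat j) a (act2 (int j) v b)" for j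
  define rG where "rG = rGamma (e + 1)"
  define NI where "NI = ({of_int k |k. k < 0} :: complex set)"
  have Bo: "(\<Sum>j::nat. s3 ((-1)^j * (of_int (-1) gchoose j))
           (act3 (0 + -1 - int j) v (Yi (e + of_nat j) a b)
            - s3 ((-1)^(nat \<bar>-1\<bar>)) (Yi (of_int (-1) + e - of_nat j) a (act2 (0 + int j) v b))))
       = (\<Sum>j::nat. s3 (of_int 0 gchoose j) (Yi (of_int 0 + e - of_nat j) (act1 (-1 + int j) v a) b))"
    using I_borch unfolding borcherds_def by blast
  have "(\<lambda>j::nat. s3 ((-1)^j * (of_int (-1) gchoose j))
           (act3 (0 + -1 - int j) v (Yi (e + of_nat j) a b)
            - s3 ((-1)^(nat \<bar>-1\<bar>)) (Yi (of_int (-1) + e - of_nat j) a (act2 (0 + int j) v b))))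
       = (\<lambda>j. U j + W j)"
  proof (rule ext)
    fix j :: nat
    have c1: "(-1)^j * (of_int (-1) gchoose j) = (1::complex)" using gch_m1[of j] by simp
    have c2: "(-1::complex)^(nat \<bar>-1::int\<bar>) = -1" by simp
    have c3: "(0::int) + -1 - int j = -1 - int j" by simp
    have c4: "of_int (-1) + e - of_nat j = e - 1 - of_nat j" by simp
    show "s3 ((-1)^j * (of_int (-1) gchoose j))
           (act3 (0 + -1 - int j) v (Yi (e + of_nat j) a b)
            - s3 ((-1)^(nat \<bar>-1\<bar>)) (Yi (of_int (-1) + e - of_nat j) a (act2 (0 + int j) v b)))
       = U j + W j"
      unfolding c1 c2 c3 c4 U_def W_def by simp
  qed
  note E1 = this
  have "(\<lambda>j::nat. s3 (of_int 0 gchoose j) (Yi (of_int 0 + e - of_nat j) (act1 (-1 + int j) v a) b))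
       = (\<lambda>j. if j = 0 then Yi e (act1 (-1) v a) b else 0)"
    by (auto simp: fun_eq_iff gbinomial_0_left)
  note E2 = this
  have finU: "finite {j. U j \<noteq> 0}"
    by (rule finite_subset[of _ "{..<K}"]) (auto simp: U_def act3_r, metis K act3_r(3) not_le)
  have finW: "{j. W j \<noteq> 0} \<subseteq> {..<N}"
    by (auto simp: W_def, metis N Yi_r(3) not_le of_nat_le_iff)
  have key: "Yi e (act1 (-1) v a) b = Sum_any U + (\<Sum>j<N. W j)"
  proof -
    have "Yi e (act1 (-1) v a) b = Sum_any (\<lambda>j. U j + W j)" using Bo unfolding E1 E2 by simp
    also have "\<dots> = Sum_any U + Sum_any W"
      by (rule Sum_any.distrib[OF finU]) (rule finite_subset[OF finW], simp)
    also have "Sum_any W = (\<Sum>j<N. W j)" by (rule Sum_any.expand_superset[OF _ finW]) simp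
    finally show ?thesis .
  qed
  have T1: "eTd sV s3 (act3 (-1)) TV v (ibr s3 Yi a b) e = s3 rG (Sum_any U)"
  proof -
    have t: "act3 (-1) (sV (1 / fact j) ((TV ^^ j) v)) (ser_deriv s3 j (ibr s3 Yi a b) e) = s3 rG (U j)" for j
    proof -
      have p: "pochhammer (e + 1) j * rGamma (e + of_nat j + 1) = rG"
        unfolding rG_def pochhammer_rGamma[of "e+1" j] by (simp add: add_ac)
      have f: "pochhammer (1::complex) j = fact j" by (simp add: pochhammer_fact)
      have "act3 (-1) (sV (1 / fact j) ((TV ^^ j) v)) (ser_deriv s3 j (ibr s3 Yi a b) e)
          = s3 (1 / fact j * pochhammer 1 j * (pochhammer (e + 1) j * rGamma (e + of_nat j + 1))) (U j)"
        by (simp add: ser_deriv_def ibr_def act3_scale_l act3_TV_pow act3_r U_def)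
      also have "\<dots> = s3 rG (U j)" unfolding p f by simp
      finally show ?thesis .
    qed
    show ?thesis unfolding eTd_def t by (rule scale_Sum_any[OF vs3, symmetric])
  qed
  have T2: "eTd s1 s2 (Yi (-1)) T1 a (lbr s2 act2 v b) e
      = (\<Sum>j<N. if e - 1 - of_nat j \<in> NI then s3 rG (W j) else 0)"
  proof (cases "e \<in> \<nat>")
    case False
    have z: "Yi (-1) (s1 (1 / fact i) ((T1^^i) a)) (ser_deriv s2 i (lbr s2 act2 v b) e) = 0" for i
    proof (cases "e + of_nat i \<in> \<nat>")
      case True
      then obtain m where m: "e + of_nat i = of_nat m" by (auto elim: Nats_cases)
      have "e - 1 - of_nat m \<in> {of_int k |k. k < 0}"
      proof -
        have "e - 1 - of_nat m = of_int (- int i - 1)" using m by (simp add: algebra_simps)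
        moreover have "- int i - 1 < 0" by simp
        ultimately show ?thesis by blast
      qed
      then have "rG = 0" unfolding rG_def by (rule NI_notnat_rG[OF False])
      have p: "pochhammer (e + 1) i * rGamma (e + of_nat i + 1) = rG"
        unfolding rG_def pochhammer_rGamma[of "e+1" i] by (simp add: add_ac)
      have "Yi (-1) (s1 (1 / fact i) ((T1^^i) a)) (ser_deriv s2 i (lbr s2 act2 v b) e)
          = s3 (1 / fact i * (pochhammer (e + 1) i * rGamma (e + of_nat i + 1))) (Yi (-1) ((T1^^i) a) (act2 \<lfloor>Re (e + of_nat i)\<rfloor> v b))"
        using True by (simp add: ser_deriv_def lbr_def Yi_l Yi_r mult_ac)
      then show ?thesis unfolding p using \<open>rG = 0\<close> by simp
    next
      case False
      then show ?thesis by (simp add: ser_deriv_def lbr_def Yi_r)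
    qed
    have "(\<Sum>j<N. if e - 1 - of_nat j \<in> NI then s3 rG (W j) else 0) = 0"
      using NI_notnat_rG[OF False] by (auto simp: NI_def rG_def intro!: sum.neutral)
    then show ?thesis unfolding eTd_def z by simp
  next
    case True
    then obtain r where e: "e = of_nat r" by (auto elim: Nats_cases)
    define f where "f i = s3 rG (Yi (-1 - of_nat i) a (act2 (int (r + i)) v b))" for i
    have t: "Yi (-1) (s1 (1 / fact i) ((T1^^i) a)) (ser_deriv s2 i (lbr s2 act2 v b) e) = f i" for i
    proof -
      have n: "e + of_nat i = of_nat (r + i)" by (simp add: e)
      have p: "pochhammer (e + 1) i * rGamma (of_nat (r + i) + 1) = rG"
        unfolding rG_def pochhammer_rGamma[of "e+1" i] by (simp add: e add_ac)
      have "Yi (-1) (s1 (1 / fact i) ((T1^^i) a)) (ser_deriv s2 i (lbr s2 act2 v b) e)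
          = s3 (1 / fact i * (pochhammer (e + 1) i * rGamma (of_nat (r + i) + 1))) (Yi (-1) ((T1^^i) a) (act2 (int (r + i)) v b))"
        unfolding ser_deriv_def lbr_def n by (simp add: Yi_l Yi_r mult_ac)
      then show ?thesis unfolding p f_def by (simp add: Yi_T1_pow_m1)
    qed
    have supp: "{i. f i \<noteq> 0} \<subseteq> {..<N}"
    proof
      fix i assume "i \<in> {i. f i \<noteq> 0}"
      then have nz: "f i \<noteq> 0" by simp
      show "i \<in> {..<N}"
      proof (rule ccontr)
        assume "i \<notin> {..<N}"
        then have "int (r + i) \<ge> int N" by simp
        then have "act2 (int (r + i)) v b = 0" using N by blast
        then have "f i = 0" by (simp add: f_def Yi_r)
        with nz show False by simp
      qed
    qed
    have lhs: "eTd s1 s2 (Yi (-1)) T1 a (lbr s2 act2 v b) e = (\<Sum>i<N. f i)"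
      unfolding eTd_def t by (rule Sum_any.expand_superset[OF _ supp]) simp
    define h where "h j = s3 rG (W j)" for j
    have hz: "h j = 0" if "N \<le> j" for j using that N by (simp add: h_def W_def Yi_r)
    have "(\<Sum>j<N. if e - 1 - of_nat j \<in> NI then s3 rG (W j) else 0) = (\<Sum>j<N. if r \<le> j then h j else 0)"
      unfolding NI_def e NI_nat_iff h_def ..
    also have "\<dots> = (\<Sum>j<N + r. if r \<le> j then h j else 0)"
      by (rule sum.mono_neutral_left) (auto simp: hz)
    also have "\<dots> = sum h ({..<N + r} \<inter> {j. r \<le> j})" by (simp add: sum.inter_restrict)
    also have "{..<N + r} \<inter> {j. r \<le> j} = {0 + r..<N + r}" by auto
    also have "sum h {0 + r..<N + r} = (\<Sum>i\<in>{0..<N}. h (i + r))" by (rule sum.shift_bounds_nat_ivl)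
    also have "\<dots> = (\<Sum>i<N. f i)"
    proof (rule sum.cong)
      fix i assume "i \<in> {..<N}"
      have "of_nat r - 1 - of_nat (i + r) = (-1 - of_nat i :: complex)" by simp
      then show "h (i + r) = f i" by (simp add: h_def W_def f_def e add.commute)
    qed auto
    finally have calc: "(\<Sum>j<N. if e - 1 - of_nat j \<in> NI then s3 rG (W j) else 0) = (\<Sum>i<N. f i)" .
    show ?thesis by (simp only: lhs calc)
  qed
  have T3: "fint s3 (ibr_mu s3 Yi a (lbr_diff s2 act2 v b)) e
      = (\<Sum>j<N. if e - 1 - of_nat j \<in> NI then 0 else s3 rG (W j))"
  proof -
    define X where "X = lbr_diff s2 act2 v b"
    define g where "g c = (if c \<in> NI then 0 else s3 (1 / (c + 1)) (ibr_mu s3 Yi a X (e - c - 1) c))" for c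
    define h where "h p q = s3 (1 / (e - of_nat p) * rGamma (e - of_nat p - of_nat q) * ((-1)^q * rGamma (of_nat p + 1) * rGamma (of_nat q + 1)))
        (Yi (e - 1 - of_nat p - of_nat q) a (act2 (int (p + q)) v b))" for p q :: nat
    have act2z: "act2 (int m) v b = 0" if "N \<le> m" for m using N that by simp
    have Xnat: "X (of_nat p) (of_nat q) = s2 ((-1)^q * rGamma (of_nat p + 1) * rGamma (of_nat q + 1)) (act2 (int (p + q)) v b)" for p q
      by (simp add: X_def lbr_diff_def)
    have Xnz: "\<exists>p' q'. p = of_nat p' \<and> q = of_nat q' \<and> p' + q' < N" if "X p q \<noteq> 0" for p q
    proof -
      have pq: "p \<in> \<nat>" "q \<in> \<nat>" using that by (auto simp: X_def lbr_diff_def split: if_splits)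
      then obtain p' q' where pq': "p = of_nat p'" "q = of_nat q'" by (auto elim!: Nats_cases)
      have "p' + q' < N"
      proof (rule ccontr)
        assume "\<not> p' + q' < N"
        then have "X p q = 0" unfolding pq' Xnat using act2z[of "p' + q'"] by simp
        with that show False by simp
      qed
      with pq' show ?thesis by blast
    qed
    have f1: "fint s3 (ibr_mu s3 Yi a (lbr_diff s2 act2 v b)) e = Sum_any g"
      unfolding fint_def g_def NI_def X_def ..
    have inner: "ibr_mu s3 Yi a X (of_nat p) c
        = (\<Sum>q<N. s3 (rGamma (c - of_nat q + 1)) (Yi (c - of_nat q) a (X (of_nat p) (of_nat q))))" for p c
    proof -
      have sub: "{q. s3 (rGamma (c - q + 1)) (Yi (c - q) a (X (of_nat p) q)) \<noteq> 0} \<subseteq> of_nat ` {..<N}"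
      proof
        fix q assume "q \<in> {q. s3 (rGamma (c - q + 1)) (Yi (c - q) a (X (of_nat p) q)) \<noteq> 0}"
        then have "X (of_nat p) q \<noteq> 0" by (auto simp: Yi_r)
        then obtain p' q' where "of_nat p = (of_nat p' :: complex)" "q = of_nat q'" "p' + q' < N" using Xnz by blast
        then show "q \<in> of_nat ` {..<N}" by auto
      qed
      have "ibr_mu s3 Yi a X (of_nat p) c = sum (\<lambda>q. s3 (rGamma (c - q + 1)) (Yi (c - q) a (X (of_nat p) q))) (of_nat ` {..<N})"
        unfolding ibr_mu_def by (rule Sum_any.expand_superset[OF _ sub]) simp
      also have "\<dots> = (\<Sum>q<N. s3 (rGamma (c - of_nat q + 1)) (Yi (c - of_nat q) a (X (of_nat p) (of_nat q))))"
        by (subst sum.reindex) (auto simp: inj_on_def)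
      finally show ?thesis .
    qed
    have gNI: "g c = s3 (1 / (c + 1)) (ibr_mu s3 Yi a X (e - c - 1) c)" for c
    proof (cases "c \<in> NI")
      case True
      have c1: "c + 1 \<in> \<int>\<^sub>\<le>\<^sub>0" using True NI_iff unfolding NI_def by blast
      have z: "(\<lambda>q. s3 (rGamma (c - q + 1)) (Yi (c - q) a (X (e - c - 1) q))) = (\<lambda>q. 0)"
      proof (rule ext)
        fix q
        show "s3 (rGamma (c - q + 1)) (Yi (c - q) a (X (e - c - 1) q)) = 0"
        proof (cases "X (e - c - 1) q = 0")
          case False
          then obtain p' q' where "q = of_nat q'" using Xnz by blast
          then have "(c + 1) - q \<in> \<int>\<^sub>\<le>\<^sub>0" using nonpos_Ints_diff_Nats[OF c1, of q] by simp
          then have "c - q + 1 \<in> \<int>\<^sub>\<le>\<^sub>0" by (simp add: algebra_simps)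
          then show ?thesis by (simp add: rGamma_nonpos_Int)
        qed (simp add: Yi_r)
      qed
      have "ibr_mu s3 Yi a X (e - c - 1) c = 0"
        unfolding ibr_mu_def z by simp
      then show ?thesis using True by (simp add: g_def)
    qed (simp add: g_def)
    have sub: "{c. g c \<noteq> 0} \<subseteq> (\<lambda>p. e - 1 - of_nat p) ` {..<N}"
    proof
      fix c assume "c \<in> {c. g c \<noteq> 0}"
      then have "ibr_mu s3 Yi a X (e - c - 1) c \<noteq> 0" by (auto simp: gNI)
      then obtain q where "s3 (rGamma (c - q + 1)) (Yi (c - q) a (X (e - c - 1) q)) \<noteq> 0"
        unfolding ibr_mu_def by (rule Sum_any.not_neutral_obtains_not_neutral)
      then have "X (e - c - 1) q \<noteq> 0" by (auto simp: Yi_r)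
      then obtain p' q' where pq: "e - c - 1 = of_nat p'" "p' + q' < N" using Xnz by blast
      then have "c = e - 1 - of_nat p'" "p' < N" by (simp_all add: algebra_simps)
      then show "c \<in> (\<lambda>p. e - 1 - of_nat p) ` {..<N}" by auto
    qed
    have inj: "inj_on (\<lambda>p. e - 1 - of_nat p) {..<N}" by (auto simp: inj_on_def)
    have f2: "Sum_any g = (\<Sum>p<N. g (e - 1 - of_nat p))"
      by (subst Sum_any.expand_superset[OF _ sub]) (simp_all add: sum.reindex[OF inj])
    have f3: "g (e - 1 - of_nat p) = (\<Sum>q<N. h p q)" for p
    proof -
      define c where "c = e - 1 - of_nat p"
      have c1: "e - c - 1 = of_nat p" "c + 1 = e - of_nat p" by (simp_all add: c_def)
      have "g c = s3 (1 / (e - of_nat p)) (\<Sum>q<N. s3 (rGamma (c - of_nat q + 1)) (Yi (c - of_nat q) a (X (of_nat p) (of_nat q))))"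
        unfolding gNI c1 inner ..
      also have "\<dots> = (\<Sum>q<N. h p q)"
        unfolding W3.scale_sum_right
      proof (rule sum.cong[OF refl])
        fix q
        have i1: "c - of_nat q + 1 = e - of_nat p - of_nat q" "c - of_nat q = e - 1 - of_nat p - of_nat q"
          by (simp_all add: c_def)
        show "s3 (1 / (e - of_nat p)) (s3 (rGamma (c - of_nat q + 1)) (Yi (c - of_nat q) a (X (of_nat p) (of_nat q)))) = h p q"
          unfolding i1 Xnat h_def by (simp add: Yi_r mult_ac) (simp add: algebra_simps)
      qed
      finally show ?thesis unfolding c_def .
    qed
    have hz: "h p q = 0" if "N \<le> p + q" for p q using act2z[OF that] by (simp add: h_def Yi_r)
    have f4: "(\<Sum>p<N. \<Sum>q<N. h p q) = (\<Sum>j<N. \<Sum>q\<le>j. h (j - q) q)"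
    proof -
      have "(\<Sum>p<N. \<Sum>q<N. h p q) = (\<Sum>q<N. \<Sum>p<N. h p q)" by (rule sum.swap)
      also have "\<dots> = (\<Sum>(q, p)\<in>{..<N} \<times> {..<N}. h p q)" by (rule sum.cartesian_product)
      also have "\<dots> = (\<Sum>(q, p)\<in>{(i, j). i + j < N}. h p q)"
        by (rule sum.mono_neutral_right) (auto, metis hz add.commute not_le)
      also have "\<dots> = (\<Sum>j<N. \<Sum>q\<le>j. h (j - q) q)"
        using sum.triangle_reindex[of "\<lambda>q p. h p q" N] by simp
      finally show ?thesis .
    qed
    have f5: "(\<Sum>q\<le>j. h (j - q) q) = (if e - 1 - of_nat j \<in> NI then 0 else s3 rG (W j))" for j
    proof -
      define n where "n = e - 1 - of_nat j"
      have "(\<Sum>q\<le>j. h (j - q) q) = (\<Sum>q\<le>j. s3 (1 / (n + of_nat q + 1) * rGamma (n + 1) * ((-1)^q * rGamma (of_nat (j - q) + 1) * rGamma (of_nat q + 1))) (W j))"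
      proof (rule sum.cong[OF refl])
        fix q assume "q \<in> {..j}"
        then have qj: "q \<le> j" by simp
        have i1: "e - of_nat (j - q) = n + of_nat q + 1" "e - of_nat (j - q) - of_nat q = n + 1"
           "e - 1 - of_nat (j - q) - of_nat q = e - 1 - of_nat j" "int (j - q + q) = int j"
          using qj by (simp_all add: n_def of_nat_diff)
        have i5: "n + of_nat q + 1 - of_nat q = n + 1" by simp
        show "h (j - q) q = s3 (1 / (n + of_nat q + 1) * rGamma (n + 1) * ((-1)^q * rGamma (of_nat (j - q) + 1) * rGamma (of_nat q + 1))) (W j)"
          unfolding h_def i1 W_def i5 ..
      qed
      also have "\<dots> = s3 (if n \<in> {of_int k |k. k < 0} then 0 else rGamma (n + of_nat j + 2)) (W j)"
        by (subst W3.scale_sum_left[symmetric], subst W_vi, rule refl)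
      also have "\<dots> = (if e - 1 - of_nat j \<in> NI then 0 else s3 rG (W j))"
      proof -
        have h1: "n + of_nat j + 2 = e + 1" by (simp add: n_def)
        show ?thesis unfolding h1 NI_def n_def rG_def by (auto simp: add.commute)
      qed
      finally show ?thesis .
    qed
    show ?thesis unfolding f1 f2 f3 f4 f5 ..
  qed
  have T23: "(\<Sum>j<N. if e - 1 - of_nat j \<in> NI then s3 rG (W j) else 0)
        + (\<Sum>j<N. if e - 1 - of_nat j \<in> NI then 0 else s3 rG (W j)) = s3 rG (\<Sum>j<N. W j)"
    by (simp add: sum.distrib[symmetric] W3.scale_sum_right) (rule sum.cong, auto)
  have "ibr s3 Yi (act1 (-1) v a) b e = s3 rG (Yi e (act1 (-1) v a) b)"
    by (simp add: ibr_def rG_def)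
  also have "\<dots> = s3 rG (Sum_any U) + s3 rG (\<Sum>j<N. W j)"
    unfolding key by (simp add: W3.scale_right_distrib)
  finally show "ibr s3 Yi (act1 (-1) v a) b e = eTd sV s3 (act3 (-1)) TV v (ibr s3 Yi a b) e
             + eTd s1 s2 (Yi (-1)) T1 a (lbr s2 act2 v b) e
             + fint s3 (ibr_mu s3 Yi a (lbr_diff s2 act2 v b)) e"
    unfolding T1 T2 T3 add.assoc T23 .
qed

end

theorem proposition3p6:
  fixes S :: "complex set"
    and sV :: "complex \<Rightarrow> 'v::ab_group_add \<Rightarrow> 'v" and vac :: 'v and TV :: "'v \<Rightarrow> 'v"
    and Y :: "int \<Rightarrow> 'v \<Rightarrow> 'v \<Rightarrow> 'v"
    and s1 :: "complex \<Rightarrow> 'm1::ab_group_add \<Rightarrow> 'm1" and T1 :: "'m1 \<Rightarrow> 'm1"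
    and act1 :: "int \<Rightarrow> 'v \<Rightarrow> 'm1 \<Rightarrow> 'm1"
    and s2 :: "complex \<Rightarrow> 'm2::ab_group_add \<Rightarrow> 'm2" and T2 :: "'m2 \<Rightarrow> 'm2"
    and act2 :: "int \<Rightarrow> 'v \<Rightarrow> 'm2 \<Rightarrow> 'm2"
    and s3 :: "complex \<Rightarrow> 'm3::ab_group_add \<Rightarrow> 'm3" and T3 :: "'m3 \<Rightarrow> 'm3"
    and act3 :: "int \<Rightarrow> 'v \<Rightarrow> 'm3 \<Rightarrow> 'm3"
    and Yi :: "complex \<Rightarrow> 'm1 \<Rightarrow> 'm2 \<Rightarrow> 'm3"
  assumes S_shift: "\<forall>s\<in>S. \<forall>k::int. s + of_int k \<in> S"
    and S_fin: "\<exists>F. finite F \<and> S \<subseteq> {f + of_int k | f k. f \<in> F}"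
    and VA: "vertex_algebra sV vac TV Y"
    and M1: "va_module sV vac Y s1 T1 act1"
    and M2: "va_module sV vac Y s2 T2 act2"
    and M3: "va_module sV vac Y s3 T3 act3"
    and I: "intertwining S s1 s2 s3 T1 T2 T3 act1 act2 act3 Yi"
  shows "\<forall>v a b.
    lbr s3 act3 v (Yi (-1) a b)
      = (\<lambda>p. Yi (-1) a (lbr s2 act2 v b p) + Yi (-1) (lbr s1 act1 v a p) b
             + fint s3 (\<lambda>p' q. ibr0 s3 Yi (lbr s1 act1 v a p') b q) p)
  \<and> ibr s3 Yi (act1 (-1) v a) b
      = (\<lambda>p. eTd sV s3 (act3 (-1)) TV v (ibr s3 Yi a b) p
             + eTd s1 s2 (Yi (-1)) T1 a (lbr s2 act2 v b) p
             + fint s3 (ibr_mu s3 Yi a (lbr_diff s2 act2 v b)) p)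
  \<and> ibr s3 Yi a (act2 (-1) v b)
      = (\<lambda>p. act3 (-1) v (ibr s3 Yi a b p) + Yi (-1) (ibr_rev s1 T1 act1 a v p) b
             + fint s3 (\<lambda>p' q. ibr s3 Yi (ibr_rev s1 T1 act1 a v p') b q) p)"
proof -
  interpret ctx sV vac TV Y s1 T1 act1 s2 T2 act2 s3 T3 act3 Yi S
    by (simp add: ctx_def VA M1 M2 M3 I)
  show ?thesis using part_v part_vi part_vii by blast
qed

end
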